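(* The assignment $\mathbf{I}:\underline{\mathrm{G}}\to\underline{\mathrm{IN}}$ sending a globally hyperbolic poset $(X,\le)$ to $(\mathbf{I}X,\mathrm{left},\mathrm{right})$, and a morphism $f:X\to Y$ to $\bar f:\mathbf{I}X\to\mathbf{I}Y$, $\bar f([a,b])=[f(a),f(b)]$, is a functor.
   Context: Order notions: directed/filtered sets, suprema $\bigsqcup$, infima $\bigwedge$, the way-below relation $x\ll y$ (for every directed $S$ with a supremum, $y\sqsubseteq\bigsqcup S$ implies $x\sqsubseteq s$ for some $s\in S$), $\Uparrow x=\{a:x\ll a\}$, $\Downarrow x=\{a:a\ll x\}$; a poset is continuous if some subset $B$ has $B\cap\Downarrow x$ containing a directed set with supremum $x$ for every $x$; a continuous dcpo additionally has suprema of all directed sets; $\max(D)$ is the set of maximal elements; the Scott topology consists of upper sets $U$ with $\bigsqcup S\in U\Rightarrow S\cap U\neq\emptyset$ for directed $S$. A continuous poset is bicontinuous if (1) $x\ll y$ iff for every filtered $S$ with an infimum, $\bigwedge S\sqsubseteq x$ implies $s\sqsubseteq y$ for some $s\in S$, and (2) each $\Uparrow x$ is filtered with infimum $x$; its interval topology has basis $\{z: a\ll z\ll b\}$. A globally hyperbolic poset is a bicontinuous poset $(X,\le)$ whose closed intervals $[a,b]=\{z:a\le z\le b\}$ are compact in the interval topology. $\underline{\mathrm{G}}$ is the category whose objects are globally hyperbolic posets and whose arrows are monotone maps continuous for the interval topologies. For such $X$, $\mathbf{I}X=\{[a,b]: a\le b\}$ ordered by reverse inclusion, with $\mathrm{left}([a,b])=[a,a]$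 and $\mathrm{right}([a,b])=[b,b]$. An interval poset is a poset $D$ with maps $\mathrm{left},\mathrm{right}:D\to\max(D)$ such that (writing $\sqcap$ for binary infimum, assumed to exist only where named) $x=\mathrm{left}(x)\sqcap\mathrm{right}(x)$; if $\mathrm{right}(x)=\mathrm{left}(y)$ then $\mathrm{left}(x\sqcap y)=\mathrm{left}(x)$, $\mathrm{right}(x\sqcap y)=\mathrm{right}(y)$; and for $p\in\max(D)$ with $x\sqsubseteq p$, $\mathrm{left}(\mathrm{left}(x)\sqcap p)=\mathrm{left}(x)$, $\mathrm{right}(\mathrm{left}(x)\sqcap p)=p$, $\mathrm{left}(p\sqcap\mathrm{right}(x))=p$, $\mathrm{right}(p\sqcap\mathrm{right}(x))=\mathrm{right}(x)$. Define $a\le b$ on $\max(D)$ iff $a=\mathrm{left}(z),b=\mathrm{right}(z)$ for some $z$; let $[p,\cdot]=\mathrm{left}^{-1}(p)$, $[\cdot,q]=\mathrm{right}^{-1}(q)$. An interval domain is an interval poset with $D$ a continuous dcpo such that: (i) if $p\in\Uparrow x\cap\max(D)$ then $\Uparrow(\mathrm{left}(x)\sqcap p)$ and $\Uparrow(p\sqcap\mathrm{right}(x))$ are nonempty; (ii) for each $x$, TFAE: $\Uparrow x\neq\emptyset$; for all $y\in[\mathrm{left}(x),\cdot]$ with $y\sqsubseteq x$, $y\ll\mathrm{right}(y)$ in the subposet $[\cdot,\mathrm{right}(y)]$; for all $y\in[\cdot,\mathrm{right}(x)]$ with $y\sqsubseteq x$, $y\ll\mathrm{left}(y)$ in the subposet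 $[\mathrm{left}(y),\cdot]$; (iii) for directed $S\subseteq[p,\cdot]$, $\mathrm{left}(\bigsqcup S)=p$ and $\mathrm{right}(\bigsqcup S)=\mathrm{right}(\bigsqcup T)$ for every directed $T\subseteq[q,\cdot]$ with $\mathrm{right}(T)=\mathrm{right}(S)$, and dually for directed $S\subseteq[\cdot,q]$, $\mathrm{right}(\bigsqcup S)=q$ and $\mathrm{left}(\bigsqcup S)=\mathrm{left}(\bigsqcup T)$ for every directed $T\subseteq[\cdot,p]$ with $\mathrm{left}(T)=\mathrm{left}(S)$; (iv) each $\{y\in\max(D):x\sqsubseteq y\}$ is Scott compact. $\underline{\mathrm{IN}}$ is the category of interval domains with arrows the Scott continuous maps $f:D\to E$ satisfying $f\circ\mathrm{left}_D=\mathrm{left}_E\circ f$ and $f\circ\mathrm{right}_D=\mathrm{right}_E\circ f$. *)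

theory Defs
  imports Main
begin

definition is_poset :: "'a set \<Rightarrow> ('a \<Rightarrow> 'a \<Rightarrow> bool) \<Rightarrow> bool" where
  "is_poset D le \<longleftrightarrow> (\<forall>x\<in>D. le x x) \<and>
     (\<forall>x\<in>D. \<forall>y\<in>D. le x y \<and> le y x \<longrightarrow> x = y) \<and>
     (\<forall>x\<in>D. \<forall>y\<in>D. \<forall>z\<in>D. le x y \<and> le y z \<longrightarrow> le x z)"

definition directed :: "'a set \<Rightarrow> ('a \<Rightarrow> 'a \<Rightarrow> bool) \<Rightarrow> 'a set \<Rightarrow> bool" where
  "directed D le S \<longleftrightarrow> S \<subseteq> D \<and> S \<noteq> {} \<and>
     (\<forall>x\<in>S. \<forall>y\<in>S. \<exists>z\<in>S. le x z \<and> le y z)"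

definition filtered :: "'a set \<Rightarrow> ('a \<Rightarrow> 'a \<Rightarrow> bool) \<Rightarrow> 'a set \<Rightarrow> bool" where
  "filtered D le S \<longleftrightarrow> S \<subseteq> D \<and> S \<noteq> {} \<and>
     (\<forall>x\<in>S. \<forall>y\<in>S. \<exists>z\<in>S. le z x \<and> le z y)"

definition is_sup :: "'a set \<Rightarrow> ('a \<Rightarrow> 'a \<Rightarrow> bool) \<Rightarrow> 'a set \<Rightarrow> 'a \<Rightarrow> bool" where
  "is_sup D le S s \<longleftrightarrow> s \<in> D \<and> (\<forall>x\<in>S. le x s) \<and>
     (\<forall>u\<in>D. (\<forall>x\<in>S. le x u) \<longrightarrow> le s u)"

definition is_inf :: "'a set \<Rightarrow> ('a \<Rightarrow> 'a \<Rightarrow> bool) \<Rightarrow> 'a set \<Rightarrow> 'a \<Rightarrow> bool" where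
  "is_inf D le S s \<longleftrightarrow> s \<in> D \<and> (\<forall>x\<in>S. le s x) \<and>
     (\<forall>u\<in>D. (\<forall>x\<in>S. le u x) \<longrightarrow> le u s)"

definition way_below :: "'a set \<Rightarrow> ('a \<Rightarrow> 'a \<Rightarrow> bool) \<Rightarrow> 'a \<Rightarrow> 'a \<Rightarrow> bool" where
  "way_below D le x y \<longleftrightarrow> (\<forall>S. directed D le S \<and> (\<exists>s. is_sup D le S s \<and> le y s)
        \<longrightarrow> (\<exists>s\<in>S. le x s))"

definition wb_up :: "'a set \<Rightarrow> ('a \<Rightarrow> 'a \<Rightarrow> bool) \<Rightarrow> 'a \<Rightarrow> 'a set" where
  "wb_up D le x = {a\<in>D. way_below D le x a}"

definition wb_down :: "'a set \<Rightarrow> ('a \<Rightarrow> 'a \<Rightarrow> bool) \<Rightarrow> 'a \<Rightarrow> 'a set" where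
  "wb_down D le x = {a\<in>D. way_below D le a x}"

definition continuous_poset :: "'a set \<Rightarrow> ('a \<Rightarrow> 'a \<Rightarrow> bool) \<Rightarrow> bool" where
  "continuous_poset D le \<longleftrightarrow> is_poset D le \<and>
     (\<exists>B\<subseteq>D. \<forall>x\<in>D. \<exists>S. S \<subseteq> B \<inter> wb_down D le x \<and> directed D le S \<and> is_sup D le S x)"

definition is_dcpo :: "'a set \<Rightarrow> ('a \<Rightarrow> 'a \<Rightarrow> bool) \<Rightarrow> bool" where
  "is_dcpo D le \<longleftrightarrow> (\<forall>S. directed D le S \<longrightarrow> (\<exists>s. is_sup D le S s))"

definition continuous_dcpo :: "'a set \<Rightarrow> ('a \<Rightarrow> 'a \<Rightarrow> bool) \<Rightarrow> bool" where
  "continuous_dcpo D le \<longleftrightarrow> continuous_poset D le \<and> is_dcpo D le"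

definition maxs :: "'a set \<Rightarrow> ('a \<Rightarrow> 'a \<Rightarrow> bool) \<Rightarrow> 'a set" where
  "maxs D le = {x\<in>D. \<forall>y\<in>D. le x y \<longrightarrow> y = x}"

definition scott_open :: "'a set \<Rightarrow> ('a \<Rightarrow> 'a \<Rightarrow> bool) \<Rightarrow> 'a set \<Rightarrow> bool" where
  "scott_open D le U \<longleftrightarrow> U \<subseteq> D \<and> (\<forall>x\<in>U. \<forall>y\<in>D. le x y \<longrightarrow> y \<in> U) \<and>
     (\<forall>S s. directed D le S \<and> is_sup D le S s \<and> s \<in> U \<longrightarrow> S \<inter> U \<noteq> {})"

definition compact_wrt :: "('a set \<Rightarrow> bool) \<Rightarrow> 'a set \<Rightarrow> bool" where
  "compact_wrt opn K \<longleftrightarrow> (\<forall>\<U>. (\<forall>U\<in>\<U>. opn U) \<and> K \<subseteq> \<Union>\<U> \<longrightarrow>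
       (\<exists>\<F>\<subseteq>\<U>. finite \<F> \<and> K \<subseteq> \<Union>\<F>))"

definition bicontinuous :: "'a set \<Rightarrow> ('a \<Rightarrow> 'a \<Rightarrow> bool) \<Rightarrow> bool" where
  "bicontinuous D le \<longleftrightarrow> continuous_poset D le \<and>
     (\<forall>x\<in>D. \<forall>y\<in>D. way_below D le x y \<longleftrightarrow>
        (\<forall>S. filtered D le S \<and> (\<exists>i. is_inf D le S i \<and> le i x) \<longrightarrow> (\<exists>s\<in>S. le s y))) \<and>
     (\<forall>x\<in>D. filtered D le (wb_up D le x) \<and> is_inf D le (wb_up D le x) x)"

definition interval_open :: "'a set \<Rightarrow> ('a \<Rightarrow> 'a \<Rightarrow> bool) \<Rightarrow> 'a set \<Rightarrow> bool" where
  "interval_open D le U \<longleftrightarrow> U \<subseteq> D \<and> (\<forall>x\<in>U. \<exists>a\<in>D. \<exists>b\<in>D.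
      way_below D le a x \<and> way_below D le x b \<and>
      {z\<in>D. way_below D le a z \<and> way_below D le z b} \<subseteq> U)"

definition cint :: "'a set \<Rightarrow> ('a \<Rightarrow> 'a \<Rightarrow> bool) \<Rightarrow> 'a \<Rightarrow> 'a \<Rightarrow> 'a set" where
  "cint X le a b = {z\<in>X. le a z \<and> le z b}"

definition globally_hyperbolic :: "'a set \<Rightarrow> ('a \<Rightarrow> 'a \<Rightarrow> bool) \<Rightarrow> bool" where
  "globally_hyperbolic X le \<longleftrightarrow> bicontinuous X le \<and>
     (\<forall>a\<in>X. \<forall>b\<in>X. le a b \<longrightarrow> compact_wrt (interval_open X le) (cint X le a b))"

definition G_arrow :: "'a set \<Rightarrow> ('a \<Rightarrow> 'a \<Rightarrow> bool) \<Rightarrow> 'b set \<Rightarrow> ('b \<Rightarrow> 'b \<Rightarrow> bool)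
    \<Rightarrow> ('a \<Rightarrow> 'b) \<Rightarrow> bool" where
  "G_arrow X leX Y leY f \<longleftrightarrow> f ` X \<subseteq> Y \<and>
     (\<forall>x\<in>X. \<forall>y\<in>X. leX x y \<longrightarrow> leY (f x) (f y)) \<and>
     (\<forall>U. interval_open Y leY U \<longrightarrow> interval_open X leX {x\<in>X. f x \<in> U})"

definition scott_continuous :: "'a set \<Rightarrow> ('a \<Rightarrow> 'a \<Rightarrow> bool) \<Rightarrow> 'b set \<Rightarrow> ('b \<Rightarrow> 'b \<Rightarrow> bool)
    \<Rightarrow> ('a \<Rightarrow> 'b) \<Rightarrow> bool" where
  "scott_continuous D leD E leE f \<longleftrightarrow> f ` D \<subseteq> E \<and>
     (\<forall>U. scott_open E leE U \<longrightarrow> scott_open D leD {x\<in>D. f x \<in> U})"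

definition interval_poset :: "'a set \<Rightarrow> ('a \<Rightarrow> 'a \<Rightarrow> bool) \<Rightarrow> ('a \<Rightarrow> 'a) \<Rightarrow> ('a \<Rightarrow> 'a) \<Rightarrow> bool" where
  "interval_poset D le lft rgt \<longleftrightarrow> is_poset D le \<and>
     (\<forall>x\<in>D. lft x \<in> maxs D le \<and> rgt x \<in> maxs D le) \<and>
     (\<forall>x\<in>D. is_inf D le {lft x, rgt x} x) \<and>
     (\<forall>x\<in>D. \<forall>y\<in>D. rgt x = lft y \<longrightarrow>
        (\<exists>m. is_inf D le {x, y} m \<and> lft m = lft x \<and> rgt m = rgt y)) \<and>
     (\<forall>x\<in>D. \<forall>p\<in>maxs D le. le x p \<longrightarrow>
        (\<exists>m. is_inf D le {lft x, p} m \<and> lft m = lft x \<and> rgt m = p) \<and>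
        (\<exists>m. is_inf D le {p, rgt x} m \<and> lft m = p \<and> rgt m = rgt x))"

definition interval_domain :: "'a set \<Rightarrow> ('a \<Rightarrow> 'a \<Rightarrow> bool) \<Rightarrow> ('a \<Rightarrow> 'a) \<Rightarrow> ('a \<Rightarrow> 'a) \<Rightarrow> bool" where
  "interval_domain D le lft rgt \<longleftrightarrow> interval_poset D le lft rgt \<and> continuous_dcpo D le \<and>
     \<comment> \<open>(i)\<close>
     (\<forall>x\<in>D. \<forall>p\<in>wb_up D le x \<inter> maxs D le.
        (\<forall>m. is_inf D le {lft x, p} m \<longrightarrow> wb_up D le m \<noteq> {}) \<and>
        (\<forall>m. is_inf D le {p, rgt x} m \<longrightarrow> wb_up D le m \<noteq> {})) \<and>
     \<comment> \<open>(ii)\<close>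
     (\<forall>x\<in>D.
        (wb_up D le x \<noteq> {} \<longleftrightarrow>
          (\<forall>y\<in>D. lft y = lft x \<and> le y x \<longrightarrow>
             way_below {z\<in>D. rgt z = rgt y} le y (rgt y))) \<and>
        (wb_up D le x \<noteq> {} \<longleftrightarrow>
          (\<forall>y\<in>D. rgt y = rgt x \<and> le y x \<longrightarrow>
             way_below {z\<in>D. lft z = lft y} le y (lft y)))) \<and>
     \<comment> \<open>(iii)\<close>
     (\<forall>p S s. directed D le S \<and> S \<subseteq> {z\<in>D. lft z = p} \<and> is_sup D le S s \<longrightarrow>
        lft s = p \<and>
        (\<forall>q T t. directed D le T \<and> T \<subseteq> {z\<in>D. lft z = q} \<and> is_sup D le T t \<and>
                 rgt ` T = rgt ` S \<longrightarrow> rgt t = rgt s)) \<and>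
     (\<forall>q S s. directed D le S \<and> S \<subseteq> {z\<in>D. rgt z = q} \<and> is_sup D le S s \<longrightarrow>
        rgt s = q \<and>
        (\<forall>p T t. directed D le T \<and> T \<subseteq> {z\<in>D. rgt z = p} \<and> is_sup D le T t \<and>
                 lft ` T = lft ` S \<longrightarrow> lft t = lft s)) \<and>
     \<comment> \<open>(iv)\<close>
     (\<forall>x\<in>D. compact_wrt (scott_open D le) {y\<in>maxs D le. le x y})"

definition IN_arrow :: "'a set \<Rightarrow> ('a \<Rightarrow> 'a \<Rightarrow> bool) \<Rightarrow> ('a \<Rightarrow> 'a) \<Rightarrow> ('a \<Rightarrow> 'a) \<Rightarrow>
    'b set \<Rightarrow> ('b \<Rightarrow> 'b \<Rightarrow> bool) \<Rightarrow> ('b \<Rightarrow> 'b) \<Rightarrow> ('b \<Rightarrow> 'b) \<Rightarrow> ('a \<Rightarrow> 'b) \<Rightarrow> bool" where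
  "IN_arrow D leD lD rD E leE lE rE f \<longleftrightarrow> scott_continuous D leD E leE f \<and>
     (\<forall>x\<in>D. f (lD x) = lE (f x) \<and> f (rD x) = rE (f x))"

definition IX :: "'a set \<Rightarrow> ('a \<Rightarrow> 'a \<Rightarrow> bool) \<Rightarrow> 'a set set" where
  "IX X le = {cint X le a b | a b. a \<in> X \<and> b \<in> X \<and> le a b}"

definition IX_le :: "'a set \<Rightarrow> 'a set \<Rightarrow> bool" where
  "IX_le S T \<longleftrightarrow> T \<subseteq> S"

definition ilo :: "'a set \<Rightarrow> ('a \<Rightarrow> 'a \<Rightarrow> bool) \<Rightarrow> 'a set \<Rightarrow> 'a" where
  "ilo X le S = (THE a. a \<in> X \<and> (\<exists>b\<in>X. le a b \<and> S = cint X le a b))"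

definition ihi :: "'a set \<Rightarrow> ('a \<Rightarrow> 'a \<Rightarrow> bool) \<Rightarrow> 'a set \<Rightarrow> 'a" where
  "ihi X le S = (THE b. b \<in> X \<and> (\<exists>a\<in>X. le a b \<and> S = cint X le a b))"

definition ileft :: "'a set \<Rightarrow> ('a \<Rightarrow> 'a \<Rightarrow> bool) \<Rightarrow> 'a set \<Rightarrow> 'a set" where
  "ileft X le S = cint X le (ilo X le S) (ilo X le S)"

definition iright :: "'a set \<Rightarrow> ('a \<Rightarrow> 'a \<Rightarrow> bool) \<Rightarrow> 'a set \<Rightarrow> 'a set" where
  "iright X le S = cint X le (ihi X le S) (ihi X le S)"

definition Imap :: "'a set \<Rightarrow> ('a \<Rightarrow> 'a \<Rightarrow> bool) \<Rightarrow> 'b set \<Rightarrow> ('b \<Rightarrow> 'b \<Rightarrow> bool)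
    \<Rightarrow> ('a \<Rightarrow> 'b) \<Rightarrow> 'a set \<Rightarrow> 'b set" where
  "Imap X leX Y leY f S = cint Y leY (f (ilo X leX S)) (f (ihi X leX S))"

end

theory Submission
  imports Defs
begin

locale gh =
  fixes X :: "'a set" and le :: "'a \<Rightarrow> 'a \<Rightarrow> bool"
  assumes gh: "globally_hyperbolic X le"
begin

abbreviation wb where "wb \<equiv> way_below X le"

lemma bic: "bicontinuous X le" using gh unfolding globally_hyperbolic_def by blast
lemma cpo: "continuous_poset X le" using bic unfolding bicontinuous_def by (rule conjunct1)
lemma po: "is_poset X le" using cpo unfolding continuous_poset_def by (rule conjunct1)
lemma refl: "x \<in> X \<Longrightarrow> le x x" using po unfolding is_poset_def by blast
lemma antisym: "x \<in> X \<Longrightarrow> y \<in> X \<Longrightarrow> le x y \<Longrightarrow> le y x \<Longrightarrow> x = y"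
  using po unfolding is_poset_def by blast
lemma trans: "x \<in> X \<Longrightarrow> y \<in> X \<Longrightarrow> z \<in> X \<Longrightarrow> le x y \<Longrightarrow> le y z \<Longrightarrow> le x z"
  using po unfolding is_poset_def by blast

lemma cont: "x \<in> X \<Longrightarrow> \<exists>S. S \<subseteq> wb_down X le x \<and> directed X le S \<and> is_sup X le S x"
proof -
  assume x: "x \<in> X"
  obtain B where "\<forall>x\<in>X. \<exists>S. S \<subseteq> B \<inter> wb_down X le x \<and> directed X le S \<and> is_sup X le S x"
    using cpo unfolding continuous_poset_def by auto
  then obtain S where "S \<subseteq> B \<inter> wb_down X le x" "directed X le S" "is_sup X le S x" using x by auto
  then show ?thesis by auto
qed

lemma upf: "x \<in> X \<Longrightarrow> filtered X le (wb_up X le x) \<and> is_inf X le (wb_up X le x) x"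
  using bic unfolding bicontinuous_def by simp

lemma bic1: "x \<in> X \<Longrightarrow> y \<in> X \<Longrightarrow> wb x y \<longleftrightarrow>
        (\<forall>S. filtered X le S \<and> (\<exists>i. is_inf X le S i \<and> le i x) \<longrightarrow> (\<exists>s\<in>S. le s y))"
  using bic unfolding bicontinuous_def by simp

lemma compact: "a \<in> X \<Longrightarrow> b \<in> X \<Longrightarrow> le a b \<Longrightarrow> compact_wrt (interval_open X le) (cint X le a b)"
  using gh unfolding globally_hyperbolic_def by simp

lemma sup_single: "y \<in> X \<Longrightarrow> is_sup X le {y} y"
  unfolding is_sup_def using refl by auto
lemma dir_single: "y \<in> X \<Longrightarrow> directed X le {y}"
  unfolding directed_def using refl by auto

lemma wb_le: "x \<in> X \<Longrightarrow> y \<in> X \<Longrightarrow> wb x y \<Longrightarrow> le x y"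
proof -
  assume x: "x \<in> X" and y: "y \<in> X" and w: "wb x y"
  have "\<exists>s\<in>{y}. le x s"
    using w unfolding way_below_def using sup_single[OF y] dir_single[OF y] refl[OF y] by blast
  then show ?thesis by simp
qed

lemma wb_trans_left: "x \<in> X \<Longrightarrow> y \<in> X \<Longrightarrow> le x y \<Longrightarrow> wb y z \<Longrightarrow> wb x z"
  unfolding way_below_def
proof (intro allI impI)
  fix S assume x: "x \<in> X" and y: "y \<in> X" and xy: "le x y"
    and w: "\<forall>S. directed X le S \<and> (\<exists>s. is_sup X le S s \<and> le z s) \<longrightarrow> (\<exists>s\<in>S. le y s)"
    and S: "directed X le S \<and> (\<exists>s. is_sup X le S s \<and> le z s)"
  then obtain t where t: "t \<in> S" "le y t" by blast
  have "t \<in> X" using S t unfolding directed_def by blast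
  then have "le x t" using trans[OF x y _ xy t(2)] by simp
  then show "\<exists>s\<in>S. le x s" using t by blast
qed

lemma wb_trans_right: "y \<in> X \<Longrightarrow> z \<in> X \<Longrightarrow> wb x y \<Longrightarrow> le y z \<Longrightarrow> wb x z"
  unfolding way_below_def
proof (intro allI impI)
  fix S assume y: "y \<in> X" and z: "z \<in> X" and yz: "le y z"
    and w: "\<forall>S. directed X le S \<and> (\<exists>s. is_sup X le S s \<and> le y s) \<longrightarrow> (\<exists>s\<in>S. le x s)"
    and S: "directed X le S \<and> (\<exists>s. is_sup X le S s \<and> le z s)"
  then obtain s where s: "is_sup X le S s" "le z s" by blast
  then have "s \<in> X" unfolding is_sup_def by blast
  then have "le y s" using trans[OF y z _ yz s(2)] by simp
  then show "\<exists>s\<in>S. le x s" using w S s by blast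
qed

lemma wb_sup: "wb x y \<Longrightarrow> directed X le S \<Longrightarrow> is_sup X le S s \<Longrightarrow> le y s \<Longrightarrow> \<exists>t\<in>S. le x t"
  unfolding way_below_def by blast

lemma sup_unique: "is_sup X le S a \<Longrightarrow> is_sup X le S b \<Longrightarrow> a = b"
  unfolding is_sup_def using antisym by blast
lemma inf_unique: "is_inf X le S a \<Longrightarrow> is_inf X le S b \<Longrightarrow> a = b"
  unfolding is_inf_def using antisym by blast

lemma ex_below: "x \<in> X \<Longrightarrow> \<exists>a\<in>X. wb a x"
proof -
  assume x: "x \<in> X"
  obtain S where "S \<subseteq> wb_down X le x" "directed X le S" using cont[OF x] by blast
  then show ?thesis unfolding directed_def wb_down_def by blast
qed

lemma ex_above: "x \<in> X \<Longrightarrow> \<exists>b\<in>X. wb x b"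
  using upf[of x] unfolding filtered_def wb_up_def by blast

lemma interp: assumes x: "x \<in> X" and z: "z \<in> X" and xz: "wb x z" shows "\<exists>y\<in>X. wb x y \<and> wb y z"
proof -
  obtain S where S: "S \<subseteq> wb_down X le z" "directed X le S" "is_sup X le S z" using cont[OF z] by blast
  define A where "A v = (SOME T. T \<subseteq> wb_down X le v \<and> directed X le T \<and> is_sup X le T v)" for v
  have A: "A v \<subseteq> wb_down X le v \<and> directed X le (A v) \<and> is_sup X le (A v) v" if "v \<in> X" for v
    unfolding A_def using cont[OF that] by (rule someI_ex)
  have SX: "S \<subseteq> X" using S unfolding directed_def by blast
  define D where "D = (\<Union>v\<in>S. A v)"
  have DX: "D \<subseteq> X" using A SX unfolding D_def wb_down_def by blast
  have dirD: "directed X le D"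
    unfolding directed_def
  proof (intro conjI ballI)
    show "D \<subseteq> X" by fact
    obtain v where "v \<in> S" using S unfolding directed_def by blast
    then show "D \<noteq> {}" using A[of v] SX unfolding D_def directed_def by blast
    fix u1 u2 assume u1: "u1 \<in> D" and u2: "u2 \<in> D"
    obtain v1 where v1: "v1 \<in> S" "u1 \<in> A v1" using u1 unfolding D_def by blast
    obtain v2 where v2: "v2 \<in> S" "u2 \<in> A v2" using u2 unfolding D_def by blast
    obtain v3 where v3: "v3 \<in> S" "le v1 v3" "le v2 v3" using S(2) v1 v2 unfolding directed_def by blast
    have v3X: "v3 \<in> X" "v1 \<in> X" "v2 \<in> X" using v1 v2 v3 SX by auto
    have "wb u1 v1" using A[of v1] v1 v3X unfolding wb_down_def by blast
    then have "wb u1 v3" using wb_trans_right[of v1 v3 u1] v3X v3 by simp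
    then obtain w1 where w1: "w1 \<in> A v3" "le u1 w1" using wb_sup[of u1 v3 "A v3" v3] A[of v3] v3X refl by blast
    have "wb u2 v2" using A[of v2] v2 v3X unfolding wb_down_def by blast
    then have "wb u2 v3" using wb_trans_right[of v2 v3 u2] v3X v3 by simp
    then obtain w2 where w2: "w2 \<in> A v3" "le u2 w2" using wb_sup[of u2 v3 "A v3" v3] A[of v3] v3X refl by blast
    obtain w where w: "w \<in> A v3" "le w1 w" "le w2 w" using A[of v3] v3X w1 w2 unfolding directed_def by blast
    have "A v3 \<subseteq> X" using A[of v3] v3X unfolding directed_def by blast
    moreover have "u1 \<in> X" "u2 \<in> X" using u1 u2 DX by auto
    ultimately have "le u1 w" "le u2 w" using trans[of u1 w1 w] trans[of u2 w2 w] w w1 w2 by auto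
    moreover have "w \<in> D" using w v3 unfolding D_def by blast
    ultimately show "\<exists>w\<in>D. le u1 w \<and> le u2 w" by blast
  qed
  have supD: "is_sup X le D z"
    unfolding is_sup_def
  proof (intro conjI ballI impI)
    show "z \<in> X" by fact
    fix u assume u: "u \<in> D"
    then obtain v where v: "v \<in> S" "u \<in> A v" unfolding D_def by blast
    have "le u v" using A[of v] v SX unfolding wb_down_def by (auto intro: wb_le)
    moreover have "le v z" using S(3) v unfolding is_sup_def by blast
    ultimately show "le u z" using trans[of u v z] u DX v SX z by auto
  next
    fix u assume u: "u \<in> X" and ub: "\<forall>x\<in>D. le x u"
    have "le v u" if "v \<in> S" for v
      using A[of v] that SX ub u unfolding is_sup_def D_def by blast
    then show "le z u" using S(3) u unfolding is_sup_def by blast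
  qed
  obtain t where t: "t \<in> D" "le x t" using wb_sup[OF xz dirD supD refl[OF z]] by blast
  then obtain v where v: "v \<in> S" "t \<in> A v" unfolding D_def by blast
  have "wb t v" using A[of v] v SX unfolding wb_down_def by blast
  then have "wb x v" using wb_trans_left[of x t v] x t DX by blast
  moreover have "wb v z" using S v unfolding wb_down_def by blast
  ultimately show ?thesis using v SX by blast
qed

end

context gh begin

lemma open_nup: assumes s: "s \<in> X" shows "interval_open X le {x\<in>X. \<not> le s x}"
  unfolding interval_open_def
proof (intro conjI ballI)
  show "{x\<in>X. \<not> le s x} \<subseteq> X" by blast
  fix x assume "x \<in> {x\<in>X. \<not> le s x}"
  then have x: "x \<in> X" and nsx: "\<not> le s x" by auto
  obtain A where A: "A \<subseteq> wb_down X le s" "directed X le A" "is_sup X le A s" using cont[OF s] by blast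
  have "\<exists>a0\<in>A. \<not> le a0 x"
  proof (rule ccontr)
    assume "\<not> ?thesis"
    then have "\<forall>a\<in>A. le a x" by blast
    then have "le s x" using A(3) x unfolding is_sup_def by blast
    then show False using nsx by blast
  qed
  then obtain a0 where a0: "a0 \<in> A" "\<not> le a0 x" by blast
  have a0X: "a0 \<in> X" and wa0: "wb a0 s" using A(1) a0 unfolding wb_down_def by auto
  have "\<exists>b0\<in>wb_up X le x. \<not> le a0 b0"
  proof (rule ccontr)
    assume "\<not> ?thesis"
    then have "\<forall>b\<in>wb_up X le x. le a0 b" by blast
    then have "le a0 x" using upf[OF x] a0X unfolding is_inf_def by blast
    then show False using a0 by blast
  qed
  then obtain b0 where b0: "b0 \<in> X" "wb x b0" "\<not> le a0 b0" unfolding wb_up_def by blast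
  obtain a' where a': "a' \<in> X" "wb a' x" using ex_below[OF x] by blast
  have "{z\<in>X. wb a' z \<and> wb z b0} \<subseteq> {x\<in>X. \<not> le s x}"
  proof (intro subsetI CollectI conjI)
    fix z assume z: "z \<in> {z\<in>X. wb a' z \<and> wb z b0}"
    then show "z \<in> X" by blast
    show "\<not> le s z"
    proof
      assume sz: "le s z"
      have "le a0 s" using wb_le[OF a0X s wa0] .
      then have "le a0 z" using trans[OF a0X s _ _ sz] z by blast
      moreover have "le z b0" using wb_le[of z b0] z b0 by blast
      ultimately have "le a0 b0" using trans[of a0 z b0] a0X z b0 by blast
      then show False using b0 by blast
    qed
  qed
  then show "\<exists>a\<in>X. \<exists>b\<in>X. wb a x \<and> wb x b \<and> {z\<in>X. wb a z \<and> wb z b} \<subseteq> {x\<in>X. \<not> le s x}"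
    using a' b0 by blast
qed

lemma open_ndown: assumes s: "s \<in> X" shows "interval_open X le {x\<in>X. \<not> le x s}"
  unfolding interval_open_def
proof (intro conjI ballI)
  show "{x\<in>X. \<not> le x s} \<subseteq> X" by blast
  fix x assume "x \<in> {x\<in>X. \<not> le x s}"
  then have x: "x \<in> X" and nxs: "\<not> le x s" by auto
  have "\<exists>b0\<in>wb_up X le s. \<not> le x b0"
  proof (rule ccontr)
    assume "\<not> ?thesis"
    then have "\<forall>b\<in>wb_up X le s. le x b" by blast
    then have "le x s" using upf[OF s] x unfolding is_inf_def by blast
    then show False using nxs by blast
  qed
  then obtain b0 where b0: "b0 \<in> X" "wb s b0" "\<not> le x b0" unfolding wb_up_def by blast
  obtain A where A: "A \<subseteq> wb_down X le x" "directed X le A" "is_sup X le A x" using cont[OF x] by blast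
  have "\<exists>a0\<in>A. \<not> le a0 b0"
  proof (rule ccontr)
    assume "\<not> ?thesis"
    then have "\<forall>a\<in>A. le a b0" by blast
    then have "le x b0" using A(3) b0 unfolding is_sup_def by blast
    then show False using b0 by blast
  qed
  then obtain a0 where a0: "a0 \<in> A" "\<not> le a0 b0" by blast
  have a0X: "a0 \<in> X" and wa0: "wb a0 x" using A(1) a0 unfolding wb_down_def by auto
  obtain b' where b': "b' \<in> X" "wb x b'" using ex_above[OF x] by blast
  have "{z\<in>X. wb a0 z \<and> wb z b'} \<subseteq> {x\<in>X. \<not> le x s}"
  proof (intro subsetI CollectI conjI)
    fix z assume z: "z \<in> {z\<in>X. wb a0 z \<and> wb z b'}"
    then show "z \<in> X" by blast
    show "\<not> le z s"
    proof
      assume zs: "le z s"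
      have "le a0 z" using wb_le[of a0 z] a0X z by blast
      then have "le a0 s" using trans[OF a0X _ s _ zs] z by blast
      moreover have "le s b0" using wb_le[OF s b0(1) b0(2)] .
      ultimately have "le a0 b0" using trans[of a0 s b0] a0X s b0 by blast
      then show False using a0 by blast
    qed
  qed
  then show "\<exists>a\<in>X. \<exists>b\<in>X. wb a x \<and> wb x b \<and> {z\<in>X. wb a z \<and> wb z b} \<subseteq> {x\<in>X. \<not> le x s}"
    using a0X wa0 b' by blast
qed

lemma dir_fin: assumes S: "directed X le S" shows "finite F \<Longrightarrow> F \<subseteq> S \<Longrightarrow> \<exists>t\<in>S. \<forall>f\<in>F. le f t"
proof (induction F rule: finite_induct)
  case empty
  then show ?case using S unfolding directed_def by blast
next
  case (insert f F)
  then obtain t where t: "t \<in> S" "\<forall>g\<in>F. le g t" by blast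
  obtain t' where t': "t' \<in> S" "le f t'" "le t t'" using S t insert.prems unfolding directed_def by blast
  have SX: "S \<subseteq> X" using S unfolding directed_def by blast
  have "\<forall>g\<in>F. le g t'" using t t' SX insert.prems trans by blast
  then show ?case using t' by blast
qed

lemma filt_fin: assumes S: "filtered X le S" shows "finite F \<Longrightarrow> F \<subseteq> S \<Longrightarrow> \<exists>t\<in>S. \<forall>f\<in>F. le t f"
proof (induction F rule: finite_induct)
  case empty
  then show ?case using S unfolding filtered_def by blast
next
  case (insert f F)
  then obtain t where t: "t \<in> S" "\<forall>g\<in>F. le t g" by blast
  obtain t' where t': "t' \<in> S" "le t' f" "le t' t" using S t insert.prems unfolding filtered_def by blast
  have SX: "S \<subseteq> X" using S unfolding filtered_def by blast
  have "\<forall>g\<in>F. le t' g" using t t' SX insert.prems trans by blast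
  then show ?case using t' by blast
qed

end

context gh begin

lemma sup_exists:
  assumes S: "directed X le S" and u: "u \<in> X" and ub: "\<forall>s\<in>S. le s u"
  shows "\<exists>c. is_sup X le S c"
proof -
  have SX: "S \<subseteq> X" using S unfolding directed_def by blast
  obtain s0 where s0: "s0 \<in> S" using S unfolding directed_def by blast
  have s0X: "s0 \<in> X" using s0 SX by blast
  define K where "K = cint X le s0 u"
  have KX: "K \<subseteq> X" unfolding K_def cint_def by blast
  have cK: "compact_wrt (interval_open X le) K" unfolding K_def using compact[OF s0X u] ub s0 by blast
  have cl: "\<exists>c\<in>K. \<forall>V. interval_open X le V \<and> c \<in> V \<longrightarrow> (\<forall>s\<in>S. \<exists>t\<in>S. le s t \<and> t \<in> V)"
  proof (rule ccontr)
    assume nc: "\<not> ?thesis"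
    define U where "U = {V. interval_open X le V \<and> (\<exists>s\<in>S. \<forall>t\<in>S. le s t \<longrightarrow> t \<notin> V)}"
    have "K \<subseteq> \<Union>U"
    proof
      fix x assume "x \<in> K"
      then obtain V s where "interval_open X le V" "x \<in> V" "s \<in> S" "\<forall>t\<in>S. le s t \<longrightarrow> t \<notin> V"
        using nc by blast
      then show "x \<in> \<Union>U" unfolding U_def by blast
    qed
    moreover have "\<forall>V\<in>U. interval_open X le V" unfolding U_def by blast
    ultimately obtain F where F: "F \<subseteq> U" "finite F" "K \<subseteq> \<Union>F"
      using cK unfolding compact_wrt_def by meson
    have "\<forall>V\<in>F. \<exists>s\<in>S. \<forall>t\<in>S. le s t \<longrightarrow> t \<notin> V" using F(1) unfolding U_def by blast
    then obtain sf where sf: "\<forall>V\<in>F. sf V \<in> S \<and> (\<forall>t\<in>S. le (sf V) t \<longrightarrow> t \<notin> V)" by metis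
    have "finite (insert s0 (sf ` F))" using F(2) by blast
    moreover have "insert s0 (sf ` F) \<subseteq> S" using sf s0 by blast
    ultimately obtain t where t: "t \<in> S" "\<forall>f\<in>insert s0 (sf ` F). le f t" using dir_fin[OF S] by blast
    have "t \<in> K" unfolding K_def cint_def using t SX ub by blast
    then obtain V where V: "V \<in> F" "t \<in> V" using F(3) by blast
    then show False using sf t by blast
  qed
  then obtain c where c: "c \<in> K" and cc: "\<forall>V. interval_open X le V \<and> c \<in> V \<longrightarrow> (\<forall>s\<in>S. \<exists>t\<in>S. le s t \<and> t \<in> V)"
    by blast
  have cX: "c \<in> X" using c KX by blast
  have "is_sup X le S c"
    unfolding is_sup_def
  proof (intro conjI ballI impI)
    show "c \<in> X" by fact
    fix s assume s: "s \<in> S"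
    show "le s c"
    proof (rule ccontr)
      assume "\<not> le s c"
      then have "c \<in> {x\<in>X. \<not> le s x}" using cX by blast
      then obtain t where "t \<in> S" "le s t" "t \<in> {x\<in>X. \<not> le s x}"
        using cc open_nup[of s] s SX by blast
      then show False by blast
    qed
  next
    fix v assume v: "v \<in> X" and vb: "\<forall>x\<in>S. le x v"
    show "le c v"
    proof (rule ccontr)
      assume "\<not> le c v"
      then have "c \<in> {x\<in>X. \<not> le x v}" using cX by blast
      then obtain t where "t \<in> S" "t \<in> {x\<in>X. \<not> le x v}"
        using cc open_ndown[OF v] s0 by blast
      then show False using vb by blast
    qed
  qed
  then show ?thesis by blast
qed

lemma inf_exists:
  assumes S: "filtered X le S" and l: "l \<in> X" and lb: "\<forall>s\<in>S. le l s"
  shows "\<exists>c. is_inf X le S c"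
proof -
  have SX: "S \<subseteq> X" using S unfolding filtered_def by blast
  obtain s0 where s0: "s0 \<in> S" using S unfolding filtered_def by blast
  have s0X: "s0 \<in> X" using s0 SX by blast
  define K where "K = cint X le l s0"
  have KX: "K \<subseteq> X" unfolding K_def cint_def by blast
  have cK: "compact_wrt (interval_open X le) K" unfolding K_def using compact[OF l s0X] lb s0 by blast
  have cl: "\<exists>c\<in>K. \<forall>V. interval_open X le V \<and> c \<in> V \<longrightarrow> (\<forall>s\<in>S. \<exists>t\<in>S. le t s \<and> t \<in> V)"
  proof (rule ccontr)
    assume nc: "\<not> ?thesis"
    define U where "U = {V. interval_open X le V \<and> (\<exists>s\<in>S. \<forall>t\<in>S. le t s \<longrightarrow> t \<notin> V)}"
    have "K \<subseteq> \<Union>U"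
    proof
      fix x assume "x \<in> K"
      then obtain V s where "interval_open X le V" "x \<in> V" "s \<in> S" "\<forall>t\<in>S. le t s \<longrightarrow> t \<notin> V"
        using nc by blast
      then show "x \<in> \<Union>U" unfolding U_def by blast
    qed
    moreover have "\<forall>V\<in>U. interval_open X le V" unfolding U_def by blast
    ultimately obtain F where F: "F \<subseteq> U" "finite F" "K \<subseteq> \<Union>F"
      using cK unfolding compact_wrt_def by meson
    have "\<forall>V\<in>F. \<exists>s\<in>S. \<forall>t\<in>S. le t s \<longrightarrow> t \<notin> V" using F(1) unfolding U_def by blast
    then obtain sf where sf: "\<forall>V\<in>F. sf V \<in> S \<and> (\<forall>t\<in>S. le t (sf V) \<longrightarrow> t \<notin> V)" by metis
    have "finite (insert s0 (sf ` F))" using F(2) by blast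
    moreover have "insert s0 (sf ` F) \<subseteq> S" using sf s0 by blast
    ultimately obtain t where t: "t \<in> S" "\<forall>f\<in>insert s0 (sf ` F). le t f" using filt_fin[OF S] by blast
    have "t \<in> K" unfolding K_def cint_def using t SX lb by blast
    then obtain V where V: "V \<in> F" "t \<in> V" using F(3) by blast
    then show False using sf t by blast
  qed
  then obtain c where c: "c \<in> K" and cc: "\<forall>V. interval_open X le V \<and> c \<in> V \<longrightarrow> (\<forall>s\<in>S. \<exists>t\<in>S. le t s \<and> t \<in> V)"
    by blast
  have cX: "c \<in> X" using c KX by blast
  have "is_inf X le S c"
    unfolding is_inf_def
  proof (intro conjI ballI impI)
    show "c \<in> X" by fact
    fix s assume s: "s \<in> S"
    show "le c s"
    proof (rule ccontr)
      assume "\<not> le c s"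
      then have "c \<in> {x\<in>X. \<not> le x s}" using cX by blast
      then obtain t where "t \<in> S" "le t s" "t \<in> {x\<in>X. \<not> le x s}"
        using cc open_ndown[of s] s SX by blast
      then show False by blast
    qed
  next
    fix v assume v: "v \<in> X" and vb: "\<forall>x\<in>S. le v x"
    show "le v c"
    proof (rule ccontr)
      assume "\<not> le v c"
      then have "c \<in> {x\<in>X. \<not> le v x}" using cX by blast
      then obtain t where "t \<in> S" "t \<in> {x\<in>X. \<not> le v x}"
        using cc open_nup[OF v] s0 by blast
      then show False using vb by blast
    qed
  qed
  then show ?thesis by blast
qed

end

lemma IX_sup_unique: "is_sup D IX_le S a \<Longrightarrow> is_sup D IX_le S b \<Longrightarrow> a = b"
proof -
  assume a: "is_sup D IX_le S a" and b: "is_sup D IX_le S b"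
  have "IX_le a b" using a b unfolding is_sup_def by metis
  moreover have "IX_le b a" using a b unfolding is_sup_def by metis
  ultimately show ?thesis unfolding IX_le_def by blast
qed
lemma IX_inf_unique: "is_inf D IX_le S a \<Longrightarrow> is_inf D IX_le S b \<Longrightarrow> a = b"
proof -
  assume a: "is_inf D IX_le S a" and b: "is_inf D IX_le S b"
  have "IX_le a b" using a b unfolding is_inf_def by metis
  moreover have "IX_le b a" using a b unfolding is_inf_def by metis
  ultimately show ?thesis unfolding IX_le_def by blast
qed

context gh begin

abbreviation ci where "ci \<equiv> cint X le"
abbreviation lo where "lo \<equiv> ilo X le"
abbreviation hi where "hi \<equiv> ihi X le"
abbreviation I where "I \<equiv> IX X le"

lemma cint_mem: "a \<in> X \<Longrightarrow> b \<in> X \<Longrightarrow> le a b \<Longrightarrow> a \<in> ci a b \<and> b \<in> ci a b"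
  unfolding cint_def using refl by auto

lemma cint_sub: assumes "a \<in> X" "b \<in> X" "c \<in> X" "d \<in> X" "le c d"
  shows "ci c d \<subseteq> ci a b \<longleftrightarrow> le a c \<and> le d b"
proof
  assume "ci c d \<subseteq> ci a b"
  then show "le a c \<and> le d b" using cint_mem[of c d] assms unfolding cint_def by blast
next
  assume h: "le a c \<and> le d b"
  show "ci c d \<subseteq> ci a b"
  proof
    fix z assume "z \<in> ci c d"
    then have z: "z \<in> X" "le c z" "le z d" unfolding cint_def by auto
    have "le a z" using trans[of a c z] assms z h by blast
    moreover have "le z b" using trans[of z d b] assms z h by blast
    ultimately show "z \<in> ci a b" unfolding cint_def using z by blast
  qed
qed

lemma cint_eq: assumes "a \<in> X" "b \<in> X" "c \<in> X" "d \<in> X" "le a b" "le c d"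
  shows "ci a b = ci c d \<longleftrightarrow> a = c \<and> b = d"
proof
  assume "ci a b = ci c d"
  then have "ci a b \<subseteq> ci c d" "ci c d \<subseteq> ci a b" by auto
  then have "le c a \<and> le b d" "le a c \<and> le d b" using cint_sub[of c d a b] cint_sub[of a b c d] assms by auto
  then show "a = c \<and> b = d" using antisym assms by blast
qed simp

lemma ilo_cint: assumes "a \<in> X" "b \<in> X" "le a b" shows "lo (ci a b) = a"
  unfolding ilo_def
proof (rule the_equality)
  show "a \<in> X \<and> (\<exists>b'\<in>X. le a b' \<and> ci a b = ci a b')" using assms by blast
next
  fix a' assume "a' \<in> X \<and> (\<exists>b'\<in>X. le a' b' \<and> ci a b = ci a' b')"
  then obtain b' where "a' \<in> X" "b' \<in> X" "le a' b'" "ci a b = ci a' b'" by blast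
  then show "a' = a" using cint_eq[of a b a' b'] assms by simp
qed

lemma ihi_cint: assumes "a \<in> X" "b \<in> X" "le a b" shows "hi (ci a b) = b"
  unfolding ihi_def
proof (rule the_equality)
  show "b \<in> X \<and> (\<exists>a'\<in>X. le a' b \<and> ci a b = ci a' b)" using assms by blast
next
  fix b' assume "b' \<in> X \<and> (\<exists>a'\<in>X. le a' b' \<and> ci a b = ci a' b')"
  then obtain a' where "a' \<in> X" "b' \<in> X" "le a' b'" "ci a b = ci a' b'" by blast
  then show "b' = b" using cint_eq[of a b a' b'] assms by simp
qed

lemma IX_I: "a \<in> X \<Longrightarrow> b \<in> X \<Longrightarrow> le a b \<Longrightarrow> ci a b \<in> I"
  unfolding IX_def by blast

lemma IX_E0: assumes "S \<in> I"
  shows "lo S \<in> X \<and> hi S \<in> X \<and> le (lo S) (hi S) \<and> ci (lo S) (hi S) = S"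
proof -
  obtain a b where "a \<in> X" "b \<in> X" "le a b" "S = ci a b" using assms unfolding IX_def by blast
  then show ?thesis using ilo_cint ihi_cint by simp
qed

lemma IX_E: "S \<in> I \<Longrightarrow> lo S \<in> X \<and> hi S \<in> X \<and> le (lo S) (hi S)"
  using IX_E0 by blast
lemma IX_eq: "S \<in> I \<Longrightarrow> ci (lo S) (hi S) = S"
  using IX_E0 by blast

lemma cint_single: "a \<in> X \<Longrightarrow> ci a a = {a}"
proof -
  assume a: "a \<in> X"
  have "z = a" if "z \<in> X" "le a z" "le z a" for z using antisym that a by blast
  then show ?thesis unfolding cint_def using refl[OF a] a by auto
qed

lemma IX_le_iff: assumes "S \<in> I" "T \<in> I"
  shows "IX_le S T \<longleftrightarrow> le (lo S) (lo T) \<and> le (hi T) (hi S)"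
proof -
  have "IX_le S T \<longleftrightarrow> ci (lo T) (hi T) \<subseteq> ci (lo S) (hi S)"
    unfolding IX_le_def using IX_eq[OF assms(1)] IX_eq[OF assms(2)] by simp
  also have "\<dots> \<longleftrightarrow> le (lo S) (lo T) \<and> le (hi T) (hi S)"
    using cint_sub[of "lo S" "hi S" "lo T" "hi T"] IX_E[OF assms(1)] IX_E[OF assms(2)] by simp
  finally show ?thesis .
qed

lemma IX_poset: "is_poset I IX_le"
  unfolding is_poset_def IX_le_def by blast

lemma IX_sup:
  assumes F: "directed I IX_le F"
  shows "\<exists>l r. is_sup X le (lo ` F) l \<and> is_inf X le (hi ` F) r \<and> le l r \<and> is_sup I IX_le F (ci l r)"
proof -
  have FI: "F \<subseteq> I" and Fne: "F \<noteq> {}" using F unfolding directed_def by auto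
  have E: "lo f \<in> X \<and> hi f \<in> X \<and> le (lo f) (hi f)" if "f \<in> F" for f
    using IX_E FI that by blast
  have up: "\<exists>h\<in>F. le (lo f) (lo h) \<and> le (lo g) (lo h) \<and> le (hi h) (hi f) \<and> le (hi h) (hi g)"
    if "f \<in> F" "g \<in> F" for f g
  proof -
    have "\<exists>h\<in>F. IX_le f h \<and> IX_le g h" using F that unfolding directed_def by blast
    then obtain h where h: "h \<in> F" "IX_le f h" "IX_le g h" by blast
    have I3: "f \<in> I" "g \<in> I" "h \<in> I" using FI that h(1) by auto
    have "le (lo f) (lo h) \<and> le (hi h) (hi f)" using IX_le_iff[OF I3(1) I3(3)] h(2) by simp
    moreover have "le (lo g) (lo h) \<and> le (hi h) (hi g)" using IX_le_iff[OF I3(2) I3(3)] h(3) by simp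
    ultimately show ?thesis using h(1) by blast
  qed
  have key: "le (lo f) (hi g)" if fF: "f \<in> F" and gF: "g \<in> F" for f g
  proof -
    obtain h where h: "h \<in> F" "le (lo f) (lo h)" "le (hi h) (hi g)" using up[OF fF gF] by blast
    have "le (lo f) (hi h)" using trans[of "lo f" "lo h" "hi h"] E h fF by blast
    then show ?thesis using trans[of "lo f" "hi h" "hi g"] E h fF gF by blast
  qed
  have dL: "directed X le (lo ` F)"
    unfolding directed_def
  proof (intro conjI ballI)
    show "lo ` F \<subseteq> X" using E by blast
    show "lo ` F \<noteq> {}" using Fne by blast
    fix x y assume "x \<in> lo ` F" "y \<in> lo ` F"
    then obtain f g where "f \<in> F" "g \<in> F" "x = lo f" "y = lo g" by blast
    then show "\<exists>z\<in>lo ` F. le x z \<and> le y z" using up[of f g] by blast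
  qed
  have fR: "filtered X le (hi ` F)"
    unfolding filtered_def
  proof (intro conjI ballI)
    show "hi ` F \<subseteq> X" using E by blast
    show "hi ` F \<noteq> {}" using Fne by blast
    fix x y assume "x \<in> hi ` F" "y \<in> hi ` F"
    then obtain f g where "f \<in> F" "g \<in> F" "x = hi f" "y = hi g" by blast
    then show "\<exists>z\<in>hi ` F. le z x \<and> le z y" using up[of f g] by blast
  qed
  obtain f0 where f0: "f0 \<in> F" using Fne by blast
  have "\<forall>s\<in>lo ` F. le s (hi f0)" using key[OF _ f0] by blast
  then obtain l where l: "is_sup X le (lo ` F) l" using sup_exists[OF dL, of "hi f0"] E[OF f0] by blast
  have "\<forall>s\<in>hi ` F. le (lo f0) s" using key[OF f0] by blast
  then obtain r where r: "is_inf X le (hi ` F) r" using inf_exists[OF fR, of "lo f0"] E[OF f0] by blast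
  have lX: "l \<in> X" and rX: "r \<in> X" using l r unfolding is_sup_def is_inf_def by auto
  have lh: "le l (hi g)" if "g \<in> F" for g
  proof -
    have "\<forall>s\<in>lo ` F. le s (hi g)" using key[OF _ that] by blast
    then show ?thesis using l E[OF that] unfolding is_sup_def by blast
  qed
  have "\<forall>s\<in>hi ` F. le l s" using lh by blast
  then have lr: "le l r" using r lX unfolding is_inf_def by blast
  have "is_sup I IX_le F (ci l r)"
    unfolding is_sup_def
  proof (intro conjI ballI impI)
    show ci: "ci l r \<in> I" using IX_I lX rX lr by blast
    have lo_ci: "lo (ci l r) = l" and hi_ci: "hi (ci l r) = r" using ilo_cint ihi_cint lX rX lr by auto
    fix f assume f: "f \<in> F"
    have "le (lo f) l" using l f unfolding is_sup_def by blast
    moreover have "le r (hi f)" using r f unfolding is_inf_def by blast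
    ultimately show "IX_le f (ci l r)" using IX_le_iff[of f "ci l r"] f FI ci lo_ci hi_ci by auto
  next
    have ci: "ci l r \<in> I" using IX_I lX rX lr by blast
    have lo_ci: "lo (ci l r) = l" and hi_ci: "hi (ci l r) = r" using ilo_cint ihi_cint lX rX lr by auto
    fix w assume w: "w \<in> I" and wb': "\<forall>f\<in>F. IX_le f w"
    have h: "le (lo f) (lo w) \<and> le (hi w) (hi f)" if "f \<in> F" for f
      using wb' IX_le_iff[of f w] FI w that by auto
    have "\<forall>s\<in>lo ` F. le s (lo w)" using h by blast
    then have "le l (lo w)" using l IX_E[OF w] unfolding is_sup_def by blast
    have "\<forall>s\<in>hi ` F. le (hi w) s" using h by blast
    then have "le (hi w) r" using r IX_E[OF w] unfolding is_inf_def by blast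
    then show "IX_le (ci l r) w" using IX_le_iff[of "ci l r" w] w IX_I[OF lX rX lr] lo_ci hi_ci \<open>le l (lo w)\<close> by auto
  qed
  then show ?thesis using l r lr by blast
qed

lemma IX_sup_eq:
  assumes F: "directed I IX_le F" and s: "is_sup I IX_le F s"
  shows "\<exists>l r. is_sup X le (lo ` F) l \<and> is_inf X le (hi ` F) r \<and> le l r \<and> s = ci l r"
  using IX_sup[OF F] IX_sup_unique[OF s] by blast

end

context gh begin

lemma IX_dir:
  assumes F: "directed I IX_le F"
  shows "directed X le (lo ` F) \<and> filtered X le (hi ` F)"
proof -
  have FI: "F \<subseteq> I" and Fne: "F \<noteq> {}" using F unfolding directed_def by auto
  have E: "lo f \<in> X \<and> hi f \<in> X \<and> le (lo f) (hi f)" if "f \<in> F" for f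
    using IX_E FI that by blast
  have up: "\<exists>h\<in>F. le (lo f) (lo h) \<and> le (lo g) (lo h) \<and> le (hi h) (hi f) \<and> le (hi h) (hi g)"
    if "f \<in> F" "g \<in> F" for f g
  proof -
    have "\<exists>h\<in>F. IX_le f h \<and> IX_le g h" using F that unfolding directed_def by blast
    then obtain h where h: "h \<in> F" "IX_le f h" "IX_le g h" by blast
    have I3: "f \<in> I" "g \<in> I" "h \<in> I" using FI that h(1) by auto
    have "le (lo f) (lo h) \<and> le (hi h) (hi f)" using IX_le_iff[OF I3(1) I3(3)] h(2) by simp
    moreover have "le (lo g) (lo h) \<and> le (hi h) (hi g)" using IX_le_iff[OF I3(2) I3(3)] h(3) by simp
    ultimately show ?thesis using h(1) by blast
  qed
  have dL: "directed X le (lo ` F)"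
    unfolding directed_def
  proof (intro conjI ballI)
    show "lo ` F \<subseteq> X" using E by blast
    show "lo ` F \<noteq> {}" using Fne by blast
    fix x y assume "x \<in> lo ` F" "y \<in> lo ` F"
    then obtain f g where "f \<in> F" "g \<in> F" "x = lo f" "y = lo g" by blast
    then show "\<exists>z\<in>lo ` F. le x z \<and> le y z" using up[of f g] by blast
  qed
  have fR: "filtered X le (hi ` F)"
    unfolding filtered_def
  proof (intro conjI ballI)
    show "hi ` F \<subseteq> X" using E by blast
    show "hi ` F \<noteq> {}" using Fne by blast
    fix x y assume "x \<in> hi ` F" "y \<in> hi ` F"
    then obtain f g where "f \<in> F" "g \<in> F" "x = hi f" "y = hi g" by blast
    then show "\<exists>z\<in>hi ` F. le z x \<and> le z y" using up[of f g] by blast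
  qed
  show ?thesis using dL fR by blast
qed

lemma wbI_intro:
  assumes X4: "a \<in> X" "b \<in> X" "c \<in> X" "d \<in> X" and cd: "le c d" and ac: "wb a c" and db: "wb d b"
  shows "way_below I IX_le (ci a b) (ci c d)"
  unfolding way_below_def
proof (intro allI impI)
  fix F assume H: "directed I IX_le F \<and> (\<exists>s. is_sup I IX_le F s \<and> IX_le (ci c d) s)"
  then have F: "directed I IX_le F" by blast
  obtain s where s: "is_sup I IX_le F s" "IX_le (ci c d) s" using H by blast
  obtain l r where lr: "is_sup X le (lo ` F) l" "is_inf X le (hi ` F) r" "le l r" "s = ci l r"
    using IX_sup_eq[OF F s(1)] by blast
  have lX: "l \<in> X" and rX: "r \<in> X" using lr unfolding is_sup_def is_inf_def by auto
  have "ci l r \<subseteq> ci c d" using s(2) lr(4) unfolding IX_le_def by simp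
  then have cl: "le c l" and rd: "le r d" using cint_sub[of c d l r] X4 lX rX lr(3) by auto
  have FI: "F \<subseteq> I" using F unfolding directed_def by blast
  have dF: "directed X le (lo ` F)" and fF: "filtered X le (hi ` F)" using IX_dir[OF F] by auto
  have "wb a l" using wb_trans_right[of c l a] X4 lX ac cl by blast
  then obtain t where "t \<in> lo ` F" "le a t" using wb_sup[OF _ dF lr(1) refl[OF lX]] by blast
  then obtain f1 where f1: "f1 \<in> F" "le a (lo f1)" by blast
  have "\<exists>s\<in>hi ` F. le s b" using bic1[of d b] X4 db fF lr(2) rd by blast
  then obtain f2 where f2: "f2 \<in> F" "le (hi f2) b" by blast
  have "\<exists>h\<in>F. IX_le f1 h \<and> IX_le f2 h" using F f1 f2 unfolding directed_def by blast
  then obtain h where h: "h \<in> F" "IX_le f1 h" "IX_le f2 h" by blast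
  have I3: "f1 \<in> I" "f2 \<in> I" "h \<in> I" using FI f1 f2 h by auto
  have "le (lo f1) (lo h)" using IX_le_iff[OF I3(1) I3(3)] h(2) by simp
  moreover have "le (hi h) (hi f2)" using IX_le_iff[OF I3(2) I3(3)] h(3) by simp
  ultimately have 1: "le a (lo h)" "le (hi h) b"
    using trans[of a "lo f1" "lo h"] trans[of "hi h" "hi f2" b] IX_E[OF I3(1)] IX_E[OF I3(2)] IX_E[OF I3(3)]
      X4 f1 f2 by auto
  have ab: "le a b"
  proof -
    have "le a c" "le d b" using wb_le X4 ac db by auto
    then have "le a d" using trans[of a c d] X4 cd by blast
    then show ?thesis using trans[of a d b] X4 \<open>le d b\<close> by blast
  qed
  have abI: "ci a b \<in> I" using IX_I X4 ab by blast
  have "IX_le (ci a b) h" using IX_le_iff[OF abI I3(3)] ilo_cint ihi_cint X4 ab 1 by simp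
  then show "\<exists>s\<in>F. IX_le (ci a b) s" using h by blast
qed

lemma app:
  assumes c: "c \<in> X" and d: "d \<in> X" and cd: "le c d"
  shows "\<exists>F. directed I IX_le F \<and> is_sup I IX_le F (ci c d) \<and> (\<forall>f\<in>F. wb (lo f) c \<and> wb d (hi f))"
proof -
  obtain A where A: "A \<subseteq> wb_down X le c" "directed X le A" "is_sup X le A c" using cont[OF c] by blast
  define W where "W = wb_up X le d"
  have W: "filtered X le W" "is_inf X le W d" using upf[OF d] unfolding W_def by auto
  have AX: "A \<subseteq> X" and WX: "W \<subseteq> X" using A(2) W(1) unfolding directed_def filtered_def by auto
  have Ac: "wb u c" if "u \<in> A" for u using A(1) that unfolding wb_down_def by blast
  have Wd: "wb d v" if "v \<in> W" for v using that unfolding W_def wb_up_def by blast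
  have uv: "le u v" if "u \<in> A" "v \<in> W" for u v
  proof -
    have "le u c" using wb_le[of u c] Ac that AX c by blast
    moreover have "le d v" using wb_le[of d v] Wd that WX d by blast
    ultimately have "le u d" using trans[of u c d] that AX c d cd by blast
    then show ?thesis using trans[of u d v] that AX WX d \<open>le d v\<close> by blast
  qed
  define F where "F = {ci u v | u v. u \<in> A \<and> v \<in> W}"
  have FI: "F \<subseteq> I" unfolding F_def using IX_I uv AX WX by blast
  have lohi: "lo (ci u v) = u \<and> hi (ci u v) = v" if "u \<in> A" "v \<in> W" for u v
    using ilo_cint ihi_cint uv[OF that] that AX WX by blast
  have Ane: "A \<noteq> {}" and Wne: "W \<noteq> {}" using A(2) W(1) unfolding directed_def filtered_def by auto
  have dir: "directed I IX_le F"
    unfolding directed_def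
  proof (intro conjI ballI)
    show "F \<subseteq> I" by fact
    show "F \<noteq> {}" using Ane Wne unfolding F_def by blast
    fix x y assume "x \<in> F" "y \<in> F"
    then obtain u1 v1 u2 v2 where x: "x = ci u1 v1" "u1 \<in> A" "v1 \<in> W"
      and y: "y = ci u2 v2" "u2 \<in> A" "v2 \<in> W" unfolding F_def by blast
    obtain u3 where u3: "u3 \<in> A" "le u1 u3" "le u2 u3" using A(2) x y unfolding directed_def by blast
    obtain v3 where v3: "v3 \<in> W" "le v3 v1" "le v3 v2" using W(1) x y unfolding filtered_def by blast
    have zF: "ci u3 v3 \<in> F" unfolding F_def using u3 v3 by blast
    have "ci u3 v3 \<subseteq> ci u1 v1" using cint_sub[of u1 v1 u3 v3] u3 v3 x y AX WX uv by blast
    moreover have "ci u3 v3 \<subseteq> ci u2 v2" using cint_sub[of u2 v2 u3 v3] u3 v3 x y AX WX uv by blast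
    ultimately show "\<exists>z\<in>F. IX_le x z \<and> IX_le y z" using zF x y unfolding IX_le_def by blast
  qed
  have sup: "is_sup I IX_le F (ci c d)"
    unfolding is_sup_def
  proof (intro conjI ballI impI)
    show "ci c d \<in> I" using IX_I c d cd by blast
    fix x assume "x \<in> F"
    then obtain u v where x: "x = ci u v" "u \<in> A" "v \<in> W" unfolding F_def by blast
    have "le u c" using wb_le[of u c] Ac x AX c by blast
    moreover have "le d v" using wb_le[of d v] Wd x WX d by blast
    ultimately have "ci c d \<subseteq> ci u v" using cint_sub[of u v c d] x AX WX c d cd by blast
    then show "IX_le x (ci c d)" using x unfolding IX_le_def by simp
  next
    fix w assume w: "w \<in> I" and ub: "\<forall>x\<in>F. IX_le x w"
    have wE: "lo w \<in> X" "hi w \<in> X" "le (lo w) (hi w)" using IX_E[OF w] by auto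
    have wsub: "w \<subseteq> ci u v" if "u \<in> A" "v \<in> W" for u v
      using ub that unfolding F_def IX_le_def by blast
    have h: "le u (lo w) \<and> le (hi w) v" if "u \<in> A" "v \<in> W" for u v
      using wsub[OF that] IX_eq[OF w] cint_sub[of u v "lo w" "hi w"] wE that AX WX by auto
    have "\<forall>u\<in>A. le u (lo w)" using h Wne by blast
    then have "le c (lo w)" using A(3) wE unfolding is_sup_def by blast
    have "\<forall>v\<in>W. le (hi w) v" using h Ane by blast
    then have "le (hi w) d" using W(2) wE unfolding is_inf_def by blast
    have "w \<subseteq> ci c d" using cint_sub[of c d "lo w" "hi w"] IX_eq[OF w] wE c d
      \<open>le c (lo w)\<close> \<open>le (hi w) d\<close> by auto
    then show "IX_le (ci c d) w" unfolding IX_le_def by simp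
  qed
  have "\<forall>f\<in>F. wb (lo f) c \<and> wb d (hi f)"
  proof
    fix f assume "f \<in> F"
    then obtain u v where "f = ci u v" "u \<in> A" "v \<in> W" unfolding F_def by blast
    then show "wb (lo f) c \<and> wb d (hi f)" using lohi Ac Wd by simp
  qed
  then show ?thesis using dir sup by blast
qed

lemma wbI_dest:
  assumes X4: "a \<in> X" "b \<in> X" "c \<in> X" "d \<in> X" and ab: "le a b" and cd: "le c d"
    and w: "way_below I IX_le (ci a b) (ci c d)"
  shows "\<exists>u\<in>X. \<exists>v\<in>X. le a u \<and> wb u c \<and> wb d v \<and> le v b"
proof -
  obtain F where F: "directed I IX_le F" "is_sup I IX_le F (ci c d)" "\<forall>f\<in>F. wb (lo f) c \<and> wb d (hi f)"
    using app[OF X4(3,4) cd] by blast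
  have "\<exists>f\<in>F. IX_le (ci a b) f"
    using w F(1,2) unfolding way_below_def IX_le_def by blast
  then obtain f where f: "f \<in> F" "f \<subseteq> ci a b" unfolding IX_le_def by blast
  have fI: "f \<in> I" using F(1) f unfolding directed_def by blast
  have fE: "lo f \<in> X" "hi f \<in> X" "le (lo f) (hi f)" using IX_E[OF fI] by auto
  have "le a (lo f) \<and> le (hi f) b" using f(2) IX_eq[OF fI] cint_sub[of a b "lo f" "hi f"] X4 fE by auto
  then show ?thesis using fE F(3) f(1) by blast
qed

end

context gh begin

abbreviation Lf where "Lf \<equiv> ileft X le"
abbreviation Rf where "Rf \<equiv> iright X le"

lemma Lf_eq: "Lf S = ci (lo S) (lo S)" unfolding ileft_def by simp
lemma Rf_eq: "Rf S = ci (hi S) (hi S)" unfolding iright_def by simp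

lemma single_I: "p \<in> X \<Longrightarrow> ci p p \<in> I" using IX_I refl by blast

lemma ci_single_eq: "p \<in> X \<Longrightarrow> q \<in> X \<Longrightarrow> ci p p = ci q q \<longleftrightarrow> p = q"
  using cint_single by auto

lemma lo_single: "p \<in> X \<Longrightarrow> lo (ci p p) = p" using ilo_cint refl by blast
lemma hi_single: "p \<in> X \<Longrightarrow> hi (ci p p) = p" using ihi_cint refl by blast

lemma maxs_I: "p \<in> X \<Longrightarrow> ci p p \<in> maxs I IX_le"
proof -
  assume p: "p \<in> X"
  have "y = ci p p" if y: "y \<in> I" "IX_le (ci p p) y" for y
  proof -
    have "y \<subseteq> {p}" using y(2) cint_single[OF p] unfolding IX_le_def by simp
    moreover have "lo y \<in> y" using cint_mem[of "lo y" "hi y"] IX_E[OF y(1)] IX_eq[OF y(1)] by auto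
    ultimately have "y = {p}" by auto
    then show ?thesis using cint_single[OF p] by simp
  qed
  then show ?thesis unfolding maxs_def using single_I[OF p] by blast
qed

lemma maxs_E: "m \<in> maxs I IX_le \<Longrightarrow> \<exists>p\<in>X. m = ci p p"
proof -
  assume m: "m \<in> maxs I IX_le"
  then have mI: "m \<in> I" unfolding maxs_def by blast
  have E: "lo m \<in> X" "hi m \<in> X" "le (lo m) (hi m)" using IX_E[OF mI] by auto
  have "ci (lo m) (lo m) \<subseteq> m" using cint_sub[of "lo m" "hi m" "lo m" "lo m"] E refl IX_eq[OF mI] by auto
  then have "IX_le m (ci (lo m) (lo m))" unfolding IX_le_def by simp
  then have "ci (lo m) (lo m) = m" using m single_I[OF E(1)] unfolding maxs_def by blast
  then show ?thesis using E by metis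
qed

lemma inf_pair:
  assumes X4: "a \<in> X" "b \<in> X" "c \<in> X" "d \<in> X" and ab: "le a b" and cd: "le c d"
    and ac: "le a c" and bd: "le b d"
  shows "is_inf I IX_le {ci a b, ci c d} (ci a d)"
proof -
  have ad: "le a d" using trans[of a b d] X4 ab bd by blast
  show ?thesis
    unfolding is_inf_def
  proof (intro conjI ballI impI)
    show "ci a d \<in> I" using IX_I X4 ad by blast
    fix x assume "x \<in> {ci a b, ci c d}"
    then show "IX_le (ci a d) x" unfolding IX_le_def
      using cint_sub[of a d a b] cint_sub[of a d c d] X4 ab cd ac bd refl by auto
  next
    fix w assume w: "w \<in> I" and h: "\<forall>x\<in>{ci a b, ci c d}. IX_le w x"
    have E: "lo w \<in> X" "hi w \<in> X" "le (lo w) (hi w)" using IX_E[OF w] by auto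
    have "ci a b \<subseteq> w" "ci c d \<subseteq> w" using h unfolding IX_le_def by auto
    then have "le (lo w) a" "le d (hi w)"
      using cint_sub[of "lo w" "hi w" a b] cint_sub[of "lo w" "hi w" c d] IX_eq[OF w] E X4 ab cd by auto
    then have "ci a d \<subseteq> w" using cint_sub[of "lo w" "hi w" a d] IX_eq[OF w] E X4 ad by auto
    then show "IX_le w (ci a d)" unfolding IX_le_def by simp
  qed
qed

lemma IX_inf_eq: "is_inf I IX_le S m \<Longrightarrow> is_inf I IX_le S m' \<Longrightarrow> m = m'"
  using IX_inf_unique by blast

lemma interval_poset_I: "interval_poset I IX_le Lf Rf"
  unfolding interval_poset_def
proof (intro conjI ballI impI)
  show "is_poset I IX_le" by (rule IX_poset)
next
  fix x assume x: "x \<in> I"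
  have E: "lo x \<in> X" "hi x \<in> X" "le (lo x) (hi x)" using IX_E[OF x] by auto
  show "Lf x \<in> maxs I IX_le" using Lf_eq maxs_I E by simp
  show "Rf x \<in> maxs I IX_le" using Rf_eq maxs_I E by simp
next
  fix x assume x: "x \<in> I"
  have E: "lo x \<in> X" "hi x \<in> X" "le (lo x) (hi x)" using IX_E[OF x] by auto
  have "is_inf I IX_le {ci (lo x) (lo x), ci (hi x) (hi x)} (ci (lo x) (hi x))"
    using inf_pair[OF E(1) E(1) E(2) E(2) refl[OF E(1)] refl[OF E(2)] E(3) E(3)] .
  then show "is_inf I IX_le {Lf x, Rf x} x" using Lf_eq Rf_eq IX_eq[OF x] by simp
next
  fix x y assume x: "x \<in> I" and y: "y \<in> I" and xy: "Rf x = Lf y"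
  have Ex: "lo x \<in> X" "hi x \<in> X" "le (lo x) (hi x)" using IX_E[OF x] by auto
  have Ey: "lo y \<in> X" "hi y \<in> X" "le (lo y) (hi y)" using IX_E[OF y] by auto
  have eq: "hi x = lo y" using xy Rf_eq Lf_eq ci_single_eq Ex Ey by simp
  have le1: "le (lo x) (lo y)" and le2: "le (hi x) (hi y)" using eq Ex Ey by auto
  have inf: "is_inf I IX_le {ci (lo x) (hi x), ci (lo y) (hi y)} (ci (lo x) (hi y))"
    using inf_pair[OF Ex(1,2) Ey(1,2) Ex(3) Ey(3) le1 le2] .
  have ad: "le (lo x) (hi y)" using trans[of "lo x" "hi x" "hi y"] Ex Ey le2 by blast
  have "Lf (ci (lo x) (hi y)) = Lf x" "Rf (ci (lo x) (hi y)) = Rf y"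
    using Lf_eq Rf_eq ilo_cint ihi_cint Ex Ey ad by auto
  then show "\<exists>m. is_inf I IX_le {x, y} m \<and> Lf m = Lf x \<and> Rf m = Rf y"
    using inf IX_eq[OF x] IX_eq[OF y] by metis
next
  fix x p assume x: "x \<in> I" and p: "p \<in> maxs I IX_le" and xp: "IX_le x p"
  have Ex: "lo x \<in> X" "hi x \<in> X" "le (lo x) (hi x)" using IX_E[OF x] by auto
  obtain q where q: "q \<in> X" "p = ci q q" using maxs_E[OF p] by blast
  have "q \<in> x" using xp q cint_mem[of q q] refl unfolding IX_le_def by blast
  then have "q \<in> ci (lo x) (hi x)" using IX_eq[OF x] by simp
  then have lq: "le (lo x) q" and qh: "le q (hi x)" unfolding cint_def by auto
  have inf1: "is_inf I IX_le {ci (lo x) (lo x), ci q q} (ci (lo x) q)"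
    using inf_pair[OF Ex(1) Ex(1) q(1) q(1) refl[OF Ex(1)] refl[OF q(1)] lq lq] .
  have inf2: "is_inf I IX_le {ci q q, ci (hi x) (hi x)} (ci q (hi x))"
    using inf_pair[OF q(1) q(1) Ex(2) Ex(2) refl[OF q(1)] refl[OF Ex(2)] qh qh] .
  have "Lf (ci (lo x) q) = Lf x" "Rf (ci (lo x) q) = p"
    using Lf_eq Rf_eq ilo_cint ihi_cint Ex q lq by auto
  then show "\<exists>m. is_inf I IX_le {Lf x, p} m \<and> Lf m = Lf x \<and> Rf m = p"
    using inf1 Lf_eq q by metis
  have "Lf (ci q (hi x)) = p" "Rf (ci q (hi x)) = Rf x"
    using Lf_eq Rf_eq ilo_cint ihi_cint Ex q qh by auto
  then show "\<exists>m. is_inf I IX_le {p, Rf x} m \<and> Lf m = p \<and> Rf m = Rf x"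
    using inf2 Rf_eq q by metis
qed

lemma cdcpo_I: "continuous_dcpo I IX_le"
  unfolding continuous_dcpo_def
proof
  show "continuous_poset I IX_le"
    unfolding continuous_poset_def
  proof (intro conjI)
    show "is_poset I IX_le" by (rule IX_poset)
    have "\<forall>x\<in>I. \<exists>S. S \<subseteq> I \<inter> wb_down I IX_le x \<and> directed I IX_le S \<and> is_sup I IX_le S x"
    proof
      fix x assume x: "x \<in> I"
      have E: "lo x \<in> X" "hi x \<in> X" "le (lo x) (hi x)" using IX_E[OF x] by auto
      obtain F where F: "directed I IX_le F" "is_sup I IX_le F (ci (lo x) (hi x))"
        "\<forall>f\<in>F. wb (lo f) (lo x) \<and> wb (hi x) (hi f)" using app[OF E] by blast
      have FI: "F \<subseteq> I" using F(1) unfolding directed_def by blast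
      have "F \<subseteq> wb_down I IX_le x"
      proof
        fix f assume f: "f \<in> F"
        have fI: "f \<in> I" using f FI by blast
        have Ef: "lo f \<in> X" "hi f \<in> X" using IX_E[OF fI] by auto
        have "way_below I IX_le (ci (lo f) (hi f)) (ci (lo x) (hi x))"
          using wbI_intro[OF Ef E(1,2) E(3)] F(3) f by blast
        then show "f \<in> wb_down I IX_le x" unfolding wb_down_def using IX_eq[OF fI] IX_eq[OF x] fI by simp
      qed
      then show "\<exists>S. S \<subseteq> I \<inter> wb_down I IX_le x \<and> directed I IX_le S \<and> is_sup I IX_le S x"
        using F FI IX_eq[OF x] by auto
    qed
    then show "\<exists>B\<subseteq>I. \<forall>x\<in>I. \<exists>S. S \<subseteq> B \<inter> wb_down I IX_le x \<and> directed I IX_le S \<and> is_sup I IX_le S x"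
      by blast
  qed
  show "is_dcpo I IX_le" unfolding is_dcpo_def using IX_sup by blast
qed

lemma cond_i:
  assumes x: "x \<in> I" and p: "p \<in> wb_up I IX_le x \<inter> maxs I IX_le"
  shows "(\<forall>m. is_inf I IX_le {Lf x, p} m \<longrightarrow> wb_up I IX_le m \<noteq> {}) \<and>
         (\<forall>m. is_inf I IX_le {p, Rf x} m \<longrightarrow> wb_up I IX_le m \<noteq> {})"
proof -
  have E: "lo x \<in> X" "hi x \<in> X" "le (lo x) (hi x)" using IX_E[OF x] by auto
  obtain q where q: "q \<in> X" "p = ci q q" using maxs_E p by blast
  have "way_below I IX_le (ci (lo x) (hi x)) (ci q q)" using p q IX_eq[OF x] unfolding wb_up_def by simp
  then obtain u v where uv: "u \<in> X" "v \<in> X" "le (lo x) u" "wb u q" "wb q v" "le v (hi x)"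
    using wbI_dest[OF E(1,2) q(1) q(1) E(3) refl[OF q(1)]] by blast
  have lq: "wb (lo x) q" using wb_trans_left[of "lo x" u q] E uv by blast
  have qh: "wb q (hi x)" using wb_trans_right[of v "hi x" q] E uv by blast
  have lq': "le (lo x) q" and qh': "le q (hi x)" using wb_le lq qh E q by auto
  have "wb_up I IX_le m \<noteq> {}" if m: "is_inf I IX_le {Lf x, p} m" for m
  proof -
    have "is_inf I IX_le {ci (lo x) (lo x), ci q q} (ci (lo x) q)"
      using inf_pair[OF E(1) E(1) q(1) q(1) refl[OF E(1)] refl[OF q(1)] lq' lq'] .
    then have meq: "m = ci (lo x) q" using IX_inf_unique m Lf_eq q by metis
    obtain e where e: "e \<in> X" "wb (lo x) e" "wb e q" using interp[OF E(1) q(1) lq] by blast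
    have "way_below I IX_le (ci (lo x) q) (ci e e)" using wbI_intro[OF E(1) q(1) e(1) e(1) refl[OF e(1)] e(2,3)] .
    then have "ci e e \<in> wb_up I IX_le m" unfolding wb_up_def using meq single_I[OF e(1)] by simp
    then show ?thesis by blast
  qed
  moreover have "wb_up I IX_le m \<noteq> {}" if m: "is_inf I IX_le {p, Rf x} m" for m
  proof -
    have "is_inf I IX_le {ci q q, ci (hi x) (hi x)} (ci q (hi x))"
      using inf_pair[OF q(1) q(1) E(2) E(2) refl[OF q(1)] refl[OF E(2)] qh' qh'] .
    then have meq: "m = ci q (hi x)" using IX_inf_unique m Rf_eq q by metis
    obtain e where e: "e \<in> X" "wb q e" "wb e (hi x)" using interp[OF q(1) E(2) qh] by blast
    have "way_below I IX_le (ci q (hi x)) (ci e e)" using wbI_intro[OF q(1) E(2) e(1) e(1) refl[OF e(1)] e(2,3)] .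
    then have "ci e e \<in> wb_up I IX_le m" unfolding wb_up_def using meq single_I[OF e(1)] by simp
    then show ?thesis by blast
  qed
  ultimately show ?thesis by blast
qed

lemma cond_iv:
  assumes x: "x \<in> I"
  shows "compact_wrt (scott_open I IX_le) {y\<in>maxs I IX_le. IX_le x y}"
  unfolding compact_wrt_def
proof (intro allI impI)
  fix U assume H: "(\<forall>u\<in>U. scott_open I IX_le u) \<and> {y\<in>maxs I IX_le. IX_le x y} \<subseteq> \<Union>U"
  have E: "lo x \<in> X" "hi x \<in> X" "le (lo x) (hi x)" using IX_E[OF x] by auto
  define V where "V = {Z. interval_open X le Z \<and> (\<exists>u\<in>U. \<forall>z\<in>Z. ci z z \<in> u)}"
  have cov: "cint X le (lo x) (hi x) \<subseteq> \<Union>V"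
  proof
    fix p assume p: "p \<in> cint X le (lo x) (hi x)"
    then have pX: "p \<in> X" unfolding cint_def by blast
    have "{p} \<subseteq> x" using p IX_eq[OF x] by auto
    then have "IX_le x (ci p p)" using cint_single[OF pX] unfolding IX_le_def by simp
    then have "ci p p \<in> {y\<in>maxs I IX_le. IX_le x y}" using maxs_I[OF pX] by blast
    then obtain u where u: "u \<in> U" "ci p p \<in> u" using H by blast
    have so: "scott_open I IX_le u" using H u by blast
    obtain F where F: "directed I IX_le F" "is_sup I IX_le F (ci p p)" "\<forall>f\<in>F. wb (lo f) p \<and> wb p (hi f)"
      using app[OF pX pX refl[OF pX]] by blast
    have "F \<inter> u \<noteq> {}" using so F u unfolding scott_open_def by blast
    then obtain f where f: "f \<in> F" "f \<in> u" by blast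
    have fI: "f \<in> I" using F(1) f unfolding directed_def by blast
    have Ef: "lo f \<in> X" "hi f \<in> X" "le (lo f) (hi f)" using IX_E[OF fI] by auto
    define Q where "Q = {z\<in>X. wb (lo f) z \<and> wb z (hi f)}"
    have Qo: "interval_open X le Q" unfolding interval_open_def Q_def using Ef by blast
    have "\<forall>z\<in>Q. ci z z \<in> u"
    proof
      fix z assume z: "z \<in> Q"
      then have zX: "z \<in> X" unfolding Q_def by blast
      have "le (lo f) z" "le z (hi f)" using wb_le z Ef unfolding Q_def by auto
      then have "ci z z \<subseteq> f" using cint_sub[of "lo f" "hi f" z z] Ef zX refl IX_eq[OF fI] by auto
      then have "IX_le f (ci z z)" unfolding IX_le_def by simp
      then show "ci z z \<in> u" using so f single_I[OF zX] unfolding scott_open_def by blast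
    qed
    then have "Q \<in> V" unfolding V_def using Qo u by blast
    moreover have "p \<in> Q" unfolding Q_def using pX F(3) f by blast
    ultimately show "p \<in> \<Union>V" by blast
  qed
  have "\<forall>Z\<in>V. interval_open X le Z" unfolding V_def by blast
  then obtain G where G: "G \<subseteq> V" "finite G" "cint X le (lo x) (hi x) \<subseteq> \<Union>G"
    using compact[OF E] cov unfolding compact_wrt_def by meson
  have "\<forall>Z\<in>G. \<exists>u\<in>U. \<forall>z\<in>Z. ci z z \<in> u" using G(1) unfolding V_def by blast
  then obtain uf where uf: "\<forall>Z\<in>G. uf Z \<in> U \<and> (\<forall>z\<in>Z. ci z z \<in> uf Z)" by metis
  have "uf ` G \<subseteq> U" "finite (uf ` G)" using uf G(2) by auto
  moreover have "{y\<in>maxs I IX_le. IX_le x y} \<subseteq> \<Union>(uf ` G)"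
  proof
    fix y assume y: "y \<in> {y\<in>maxs I IX_le. IX_le x y}"
    then obtain p where p: "p \<in> X" "y = ci p p" using maxs_E by blast
    have "p \<in> x" using y p cint_mem[of p p] refl unfolding IX_le_def by blast
    then have "p \<in> cint X le (lo x) (hi x)" using IX_eq[OF x] by simp
    then obtain Z where "Z \<in> G" "p \<in> Z" using G(3) by blast
    then show "y \<in> \<Union>(uf ` G)" using uf p by blast
  qed
  ultimately show "\<exists>F\<subseteq>U. finite F \<and> {y\<in>maxs I IX_le. IX_le x y} \<subseteq> \<Union>F" by blast
qed

end

context gh begin

lemma wbup_iff: assumes x: "x \<in> I" shows "wb_up I IX_le x \<noteq> {} \<longleftrightarrow> wb (lo x) (hi x)"
proof -
  have E: "lo x \<in> X" "hi x \<in> X" "le (lo x) (hi x)" using IX_E[OF x] by auto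
  show ?thesis
  proof
    assume "wb_up I IX_le x \<noteq> {}"
    then obtain y where y: "y \<in> I" "way_below I IX_le x y" unfolding wb_up_def by blast
    have Ey: "lo y \<in> X" "hi y \<in> X" "le (lo y) (hi y)" using IX_E[OF y(1)] by auto
    have "way_below I IX_le (ci (lo x) (hi x)) (ci (lo y) (hi y))" using y IX_eq[OF x] IX_eq[OF y(1)] by simp
    then obtain u v where uv: "u \<in> X" "v \<in> X" "le (lo x) u" "wb u (lo y)" "wb (hi y) v" "le v (hi x)"
      using wbI_dest[OF E(1,2) Ey(1,2) E(3) Ey(3)] by blast
    have "wb (lo x) (lo y)" using wb_trans_left[of "lo x" u "lo y"] E uv by blast
    then have 1: "wb (lo x) (hi y)" using wb_trans_right[of "lo y" "hi y" "lo x"] Ey by blast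
    have "le (hi y) (hi x)" using wb_le[of "hi y" v] trans[of "hi y" v "hi x"] uv Ey E by blast
    then show "wb (lo x) (hi x)" using wb_trans_right[of "hi y" "hi x" "lo x"] 1 Ey E by blast
  next
    assume w: "wb (lo x) (hi x)"
    obtain e where e: "e \<in> X" "wb (lo x) e" "wb e (hi x)" using interp[OF E(1,2) w] by blast
    have "way_below I IX_le (ci (lo x) (hi x)) (ci e e)"
      using wbI_intro[OF E(1,2) e(1) e(1) refl[OF e(1)] e(2,3)] .
    then have "ci e e \<in> wb_up I IX_le x" unfolding wb_up_def using IX_eq[OF x] single_I[OF e(1)] by simp
    then show "wb_up I IX_le x \<noteq> {}" by blast
  qed
qed

lemma dir_sub: "directed P IX_le T \<Longrightarrow> P \<subseteq> I \<Longrightarrow> directed I IX_le T"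
  unfolding directed_def by blast

lemma sub1:
  assumes a: "a \<in> X" and b: "b \<in> X" and ab: "le a b"
  shows "way_below {z\<in>I. Rf z = ci b b} IX_le (ci a b) (ci b b) \<longleftrightarrow> wb a b"
proof -
  define P where "P = {z\<in>I. Rf z = ci b b}"
  have Pc: "z \<in> P \<longleftrightarrow> z \<in> I \<and> hi z = b" for z
  proof -
    have "z \<in> I \<Longrightarrow> Rf z = ci b b \<longleftrightarrow> hi z = b" using Rf_eq ci_single_eq IX_E b by metis
    then show ?thesis unfolding P_def by blast
  qed
  have PI: "P \<subseteq> I" using Pc by blast
  have zeq: "ci (lo z) b = z" if "z \<in> P" for z using IX_eq Pc that by metis
  have zE: "lo z \<in> X \<and> le (lo z) b" if "z \<in> P" for z using IX_E Pc that by metis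
  show ?thesis
  proof
    assume wP: "way_below {z\<in>I. Rf z = ci b b} IX_le (ci a b) (ci b b)"
    obtain A where A: "A \<subseteq> wb_down X le b" "directed X le A" "is_sup X le A b" using cont[OF b] by blast
    have AX: "A \<subseteq> X" using A(2) unfolding directed_def by blast
    have Ab: "wb u b" if "u \<in> A" for u using A(1) that unfolding wb_down_def by blast
    have Ab': "le u b" if "u \<in> A" for u using wb_le Ab AX that b by blast
    define T where "T = (\<lambda>u. ci u b) ` A"
    have TP: "T \<subseteq> P" unfolding T_def using Pc IX_I ihi_cint AX Ab' b by auto
    have dT: "directed P IX_le T"
      unfolding directed_def
    proof (intro conjI ballI)
      show "T \<subseteq> P" by fact
      show "T \<noteq> {}" using A(2) unfolding T_def directed_def by blast
      fix x y assume "x \<in> T" "y \<in> T"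
      then obtain u1 u2 where u: "u1 \<in> A" "u2 \<in> A" "x = ci u1 b" "y = ci u2 b" unfolding T_def by blast
      obtain u3 where u3: "u3 \<in> A" "le u1 u3" "le u2 u3" using A(2) u unfolding directed_def by blast
      have "ci u3 b \<subseteq> ci u1 b" "ci u3 b \<subseteq> ci u2 b"
        using cint_sub[of u1 b u3 b] cint_sub[of u2 b u3 b] u u3 AX b Ab' refl by auto
      then show "\<exists>z\<in>T. IX_le x z \<and> IX_le y z" using u u3 unfolding T_def IX_le_def by blast
    qed
    have sT: "is_sup P IX_le T (ci b b)"
      unfolding is_sup_def
    proof (intro conjI ballI impI)
      show "ci b b \<in> P" using Pc single_I[OF b] hi_single[OF b] by blast
      fix x assume "x \<in> T"
      then obtain u where u: "u \<in> A" "x = ci u b" unfolding T_def by blast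
      then show "IX_le x (ci b b)" using cint_sub[of u b b b] AX b Ab' refl unfolding IX_le_def by auto
    next
      fix w assume w: "w \<in> P" and ub: "\<forall>x\<in>T. IX_le x w"
      have "le u (lo w)" if "u \<in> A" for u
      proof -
        have "w \<subseteq> ci u b" using ub that unfolding T_def IX_le_def by blast
        then show ?thesis using cint_sub[of u b "lo w" b] zeq[OF w] zE[OF w] AX that b by auto
      qed
      then have "le b (lo w)" using A(3) zE[OF w] unfolding is_sup_def by blast
      then have "lo w = b" using antisym zE[OF w] b by blast
      then have "w = ci b b" using zeq[OF w] by simp
      then show "IX_le (ci b b) w" unfolding IX_le_def by simp
    qed
    have "\<exists>z\<in>T. IX_le (ci a b) z" using wP dT sT unfolding way_below_def P_def IX_le_def by blast
    then obtain u where u: "u \<in> A" "ci u b \<subseteq> ci a b" unfolding T_def IX_le_def by blast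
    then have "le a u" using cint_sub[of a b u b] a b AX Ab' by auto
    then show "wb a b" using wb_trans_left[of a u b] a AX u Ab by blast
  next
    assume w: "wb a b"
    show "way_below {z\<in>I. Rf z = ci b b} IX_le (ci a b) (ci b b)"
      unfolding way_below_def P_def[symmetric]
    proof (intro allI impI)
      fix T assume H: "directed P IX_le T \<and> (\<exists>s. is_sup P IX_le T s \<and> IX_le (ci b b) s)"
      then obtain s where s: "is_sup P IX_le T s" "IX_le (ci b b) s" by blast
      have TP: "T \<subseteq> P" using H unfolding directed_def by blast
      have dI: "directed I IX_le T" using dir_sub H PI by blast
      have dL: "directed X le (lo ` T)" using IX_dir[OF dI] by blast
      have "\<forall>t\<in>lo ` T. le t b" using zE TP by blast
      then obtain e where e: "is_sup X le (lo ` T) e" using sup_exists[OF dL b] by blast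
      have eX: "e \<in> X" using e unfolding is_sup_def by blast
      have eb: "le e b" using e b zE TP unfolding is_sup_def by blast
      have ceP: "ci e b \<in> P" using Pc IX_I[OF eX b eb] ihi_cint[OF eX b eb] by blast
      have "\<forall>z\<in>T. IX_le z (ci e b)"
      proof
        fix z assume z: "z \<in> T"
        have "le (lo z) e" using e z unfolding is_sup_def by blast
        then have "ci e b \<subseteq> ci (lo z) b" using cint_sub[of "lo z" b e b] zE z TP eX b eb refl by auto
        then show "IX_le z (ci e b)" using zeq z TP unfolding IX_le_def by auto
      qed
      then have "IX_le s (ci e b)" using s(1) ceP unfolding is_sup_def by blast
      then have "ci e b \<subseteq> {b}" using s(2) cint_single[OF b] unfolding IX_le_def by auto
      then have "e = b" using cint_mem[OF eX b eb] by auto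
      then have "is_sup X le (lo ` T) b" using e by simp
      then obtain t where "t \<in> lo ` T" "le a t" using wb_sup[OF w dL _ refl[OF b]] by blast
      then obtain z where z: "z \<in> T" "le a (lo z)" by blast
      have "ci (lo z) b \<subseteq> ci a b" using cint_sub[of a b "lo z" b] z zE TP a b refl by auto
      then show "\<exists>s\<in>T. IX_le (ci a b) s" using z zeq TP unfolding IX_le_def by auto
    qed
  qed
qed

lemma sub2:
  assumes a: "a \<in> X" and b: "b \<in> X" and ab: "le a b"
  shows "way_below {z\<in>I. Lf z = ci a a} IX_le (ci a b) (ci a a) \<longleftrightarrow> wb a b"
proof -
  define P where "P = {z\<in>I. Lf z = ci a a}"
  have Pc: "z \<in> P \<longleftrightarrow> z \<in> I \<and> lo z = a" for z
  proof -
    have "z \<in> I \<Longrightarrow> Lf z = ci a a \<longleftrightarrow> lo z = a" using Lf_eq ci_single_eq IX_E a by metis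
    then show ?thesis unfolding P_def by blast
  qed
  have PI: "P \<subseteq> I" using Pc by blast
  have zeq: "ci a (hi z) = z" if "z \<in> P" for z using IX_eq Pc that by metis
  have zE: "hi z \<in> X \<and> le a (hi z)" if "z \<in> P" for z using IX_E Pc that by metis
  show ?thesis
  proof
    assume wP: "way_below {z\<in>I. Lf z = ci a a} IX_le (ci a b) (ci a a)"
    define W where "W = wb_up X le a"
    have W: "filtered X le W" "is_inf X le W a" using upf[OF a] unfolding W_def by auto
    have WX: "W \<subseteq> X" using W(1) unfolding filtered_def by blast
    have Wa: "wb a v" if "v \<in> W" for v using that unfolding W_def wb_up_def by blast
    have Wa': "le a v" if "v \<in> W" for v using wb_le Wa WX that a by blast
    define T where "T = (\<lambda>v. ci a v) ` W"
    have TP: "T \<subseteq> P" unfolding T_def using Pc IX_I ilo_cint WX Wa' a by auto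
    have dT: "directed P IX_le T"
      unfolding directed_def
    proof (intro conjI ballI)
      show "T \<subseteq> P" by fact
      show "T \<noteq> {}" using W(1) unfolding T_def filtered_def by blast
      fix x y assume "x \<in> T" "y \<in> T"
      then obtain v1 v2 where v: "v1 \<in> W" "v2 \<in> W" "x = ci a v1" "y = ci a v2" unfolding T_def by blast
      obtain v3 where v3: "v3 \<in> W" "le v3 v1" "le v3 v2" using W(1) v unfolding filtered_def by blast
      have "ci a v3 \<subseteq> ci a v1" "ci a v3 \<subseteq> ci a v2"
        using cint_sub[of a v1 a v3] cint_sub[of a v2 a v3] v v3 WX a Wa' refl by auto
      then show "\<exists>z\<in>T. IX_le x z \<and> IX_le y z" using v v3 unfolding T_def IX_le_def by blast
    qed
    have sT: "is_sup P IX_le T (ci a a)"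
      unfolding is_sup_def
    proof (intro conjI ballI impI)
      show "ci a a \<in> P" using Pc single_I[OF a] lo_single[OF a] by blast
      fix x assume "x \<in> T"
      then obtain v where v: "v \<in> W" "x = ci a v" unfolding T_def by blast
      then show "IX_le x (ci a a)" using cint_sub[of a v a a] WX a Wa' refl unfolding IX_le_def by auto
    next
      fix w assume w: "w \<in> P" and ub: "\<forall>x\<in>T. IX_le x w"
      have "le (hi w) v" if "v \<in> W" for v
      proof -
        have "w \<subseteq> ci a v" using ub that unfolding T_def IX_le_def by blast
        then show ?thesis using cint_sub[of a v a "hi w"] zeq[OF w] zE[OF w] WX that a by auto
      qed
      then have "le (hi w) a" using W(2) zE[OF w] unfolding is_inf_def by blast
      then have "hi w = a" using antisym zE[OF w] a by blast
      then have "w = ci a a" using zeq[OF w] by simp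
      then show "IX_le (ci a a) w" unfolding IX_le_def by simp
    qed
    have "\<exists>z\<in>T. IX_le (ci a b) z" using wP dT sT unfolding way_below_def P_def IX_le_def by blast
    then obtain v where v: "v \<in> W" "ci a v \<subseteq> ci a b" unfolding T_def IX_le_def by blast
    then have "le v b" using cint_sub[of a b a v] a b WX Wa' by auto
    then show "wb a b" using wb_trans_right[of v b a] b WX v Wa by blast
  next
    assume w: "wb a b"
    show "way_below {z\<in>I. Lf z = ci a a} IX_le (ci a b) (ci a a)"
      unfolding way_below_def P_def[symmetric]
    proof (intro allI impI)
      fix T assume H: "directed P IX_le T \<and> (\<exists>s. is_sup P IX_le T s \<and> IX_le (ci a a) s)"
      then obtain s where s: "is_sup P IX_le T s" "IX_le (ci a a) s" by blast
      have TP: "T \<subseteq> P" using H unfolding directed_def by blast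
      have dI: "directed I IX_le T" using dir_sub H PI by blast
      have fR: "filtered X le (hi ` T)" using IX_dir[OF dI] by blast
      have "\<forall>t\<in>hi ` T. le a t" using zE TP by blast
      then obtain e where e: "is_inf X le (hi ` T) e" using inf_exists[OF fR a] by blast
      have eX: "e \<in> X" using e unfolding is_inf_def by blast
      have ae: "le a e" using e a zE TP unfolding is_inf_def by blast
      have ceP: "ci a e \<in> P" using Pc IX_I[OF a eX ae] ilo_cint[OF a eX ae] by blast
      have "\<forall>z\<in>T. IX_le z (ci a e)"
      proof
        fix z assume z: "z \<in> T"
        have "le e (hi z)" using e z unfolding is_inf_def by blast
        then have "ci a e \<subseteq> ci a (hi z)" using cint_sub[of a "hi z" a e] zE z TP eX a ae refl by auto
        then show "IX_le z (ci a e)" using zeq z TP unfolding IX_le_def by auto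
      qed
      then have "IX_le s (ci a e)" using s(1) ceP unfolding is_sup_def by blast
      then have "ci a e \<subseteq> {a}" using s(2) cint_single[OF a] unfolding IX_le_def by auto
      then have "e = a" using cint_mem[OF a eX ae] by auto
      then have ia: "is_inf X le (hi ` T) a" using e by simp
      have "\<exists>t\<in>hi ` T. le t b" using bic1[OF a b] w fR ia refl[OF a] by blast
      then obtain z where z: "z \<in> T" "le (hi z) b" by blast
      have "ci a (hi z) \<subseteq> ci a b" using cint_sub[of a b a "hi z"] z zE TP a b refl by auto
      then show "\<exists>s\<in>T. IX_le (ci a b) s" using z zeq TP unfolding IX_le_def by auto
    qed
  qed
qed

end

context gh begin

lemma cond_ii:
  assumes x: "x \<in> I"
  shows "(wb_up I IX_le x \<noteq> {} \<longleftrightarrow>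
          (\<forall>y\<in>I. Lf y = Lf x \<and> IX_le y x \<longrightarrow>
             way_below {z\<in>I. Rf z = Rf y} IX_le y (Rf y))) \<and>
        (wb_up I IX_le x \<noteq> {} \<longleftrightarrow>
          (\<forall>y\<in>I. Rf y = Rf x \<and> IX_le y x \<longrightarrow>
             way_below {z\<in>I. Lf z = Lf y} IX_le y (Lf y)))"
proof -
  have E: "lo x \<in> X" "hi x \<in> X" "le (lo x) (hi x)" using IX_E[OF x] by auto
  have r1: "way_below {z\<in>I. Rf z = Rf y} IX_le y (Rf y) \<longleftrightarrow> wb (lo x) (hi y)"
    if y: "y \<in> I" "Lf y = Lf x" "IX_le y x" for y
  proof -
    have Ey: "lo y \<in> X" "hi y \<in> X" "le (lo y) (hi y)" using IX_E[OF y(1)] by auto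
    have "lo y = lo x" using y(2) Lf_eq ci_single_eq E Ey by simp
    then have "y = ci (lo x) (hi y)" using IX_eq[OF y(1)] by simp
    then show ?thesis using sub1[of "lo x" "hi y"] Rf_eq[of y] Ey E \<open>lo y = lo x\<close> by simp
  qed
  have r2: "way_below {z\<in>I. Lf z = Lf y} IX_le y (Lf y) \<longleftrightarrow> wb (lo y) (hi x)"
    if y: "y \<in> I" "Rf y = Rf x" "IX_le y x" for y
  proof -
    have Ey: "lo y \<in> X" "hi y \<in> X" "le (lo y) (hi y)" using IX_E[OF y(1)] by auto
    have "hi y = hi x" using y(2) Rf_eq ci_single_eq E Ey by simp
    then have "y = ci (lo y) (hi x)" using IX_eq[OF y(1)] by simp
    then show ?thesis using sub2[of "lo y" "hi x"] Lf_eq[of y] Ey E \<open>hi y = hi x\<close> by simp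
  qed
  have xx: "IX_le x x" unfolding IX_le_def by simp
  have A1: "wb (lo x) (hi x) \<longleftrightarrow> (\<forall>y\<in>I. Lf y = Lf x \<and> IX_le y x \<longrightarrow>
             way_below {z\<in>I. Rf z = Rf y} IX_le y (Rf y))"
  proof
    assume w: "wb (lo x) (hi x)"
    show "\<forall>y\<in>I. Lf y = Lf x \<and> IX_le y x \<longrightarrow> way_below {z\<in>I. Rf z = Rf y} IX_le y (Rf y)"
    proof (intro ballI impI)
      fix y assume y: "y \<in> I" "Lf y = Lf x \<and> IX_le y x"
      have Ey: "lo y \<in> X" "hi y \<in> X" "le (lo y) (hi y)" using IX_E[OF y(1)] by auto
      have "le (hi x) (hi y)" using IX_le_iff[OF y(1) x] y by blast
      then have "wb (lo x) (hi y)" using wb_trans_right[of "hi x" "hi y" "lo x"] w E Ey by blast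
      then show "way_below {z\<in>I. Rf z = Rf y} IX_le y (Rf y)" using r1 y by blast
    qed
  next
    assume "\<forall>y\<in>I. Lf y = Lf x \<and> IX_le y x \<longrightarrow> way_below {z\<in>I. Rf z = Rf y} IX_le y (Rf y)"
    then show "wb (lo x) (hi x)" using r1[OF x HOL.refl xx] x xx by blast
  qed
  have A2: "wb (lo x) (hi x) \<longleftrightarrow> (\<forall>y\<in>I. Rf y = Rf x \<and> IX_le y x \<longrightarrow>
             way_below {z\<in>I. Lf z = Lf y} IX_le y (Lf y))"
  proof
    assume w: "wb (lo x) (hi x)"
    show "\<forall>y\<in>I. Rf y = Rf x \<and> IX_le y x \<longrightarrow> way_below {z\<in>I. Lf z = Lf y} IX_le y (Lf y)"
    proof (intro ballI impI)
      fix y assume y: "y \<in> I" "Rf y = Rf x \<and> IX_le y x"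
      have Ey: "lo y \<in> X" "hi y \<in> X" "le (lo y) (hi y)" using IX_E[OF y(1)] by auto
      have "le (lo y) (lo x)" using IX_le_iff[OF y(1) x] y by blast
      then have "wb (lo y) (hi x)" using wb_trans_left[of "lo y" "lo x" "hi x"] w E Ey by blast
      then show "way_below {z\<in>I. Lf z = Lf y} IX_le y (Lf y)" using r2 y by blast
    qed
  next
    assume "\<forall>y\<in>I. Rf y = Rf x \<and> IX_le y x \<longrightarrow> way_below {z\<in>I. Lf z = Lf y} IX_le y (Lf y)"
    then show "wb (lo x) (hi x)" using r2[OF x HOL.refl xx] x xx by blast
  qed
  show ?thesis using wbup_iff[OF x] A1 A2 by blast
qed

lemma sup_ends:
  assumes F: "directed I IX_le F" and s: "is_sup I IX_le F s"
  shows "is_sup X le (lo ` F) (lo s) \<and> is_inf X le (hi ` F) (hi s)"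
proof -
  obtain l r where lr: "is_sup X le (lo ` F) l" "is_inf X le (hi ` F) r" "le l r" "s = ci l r"
    using IX_sup_eq[OF F s] by blast
  have "l \<in> X" "r \<in> X" using lr unfolding is_sup_def is_inf_def by auto
  then have "lo s = l" "hi s = r" using ilo_cint ihi_cint lr by auto
  then show ?thesis using lr by simp
qed

lemma hi_via_R: "z \<in> I \<Longrightarrow> hi z = lo (Rf z)"
  using Rf_eq lo_single IX_E by metis
lemma lo_via_L: "z \<in> I \<Longrightarrow> lo z = hi (Lf z)"
  using Lf_eq hi_single IX_E by metis

lemma cond_iii_a:
  "\<forall>p S s. directed I IX_le S \<and> S \<subseteq> {z\<in>I. Lf z = p} \<and> is_sup I IX_le S s \<longrightarrow>
        Lf s = p \<and>
        (\<forall>q T t. directed I IX_le T \<and> T \<subseteq> {z\<in>I. Lf z = q} \<and> is_sup I IX_le T t \<and>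
                 Rf ` T = Rf ` S \<longrightarrow> Rf t = Rf s)"
proof (intro allI impI conjI)
  fix p S s assume H: "directed I IX_le S \<and> S \<subseteq> {z\<in>I. Lf z = p} \<and> is_sup I IX_le S s"
  have S: "directed I IX_le S" and Sp: "S \<subseteq> {z\<in>I. Lf z = p}" and s: "is_sup I IX_le S s" using H by auto
  have se: "is_sup X le (lo ` S) (lo s)" "is_inf X le (hi ` S) (hi s)" using sup_ends[OF S s] by auto
  obtain z0 where z0: "z0 \<in> S" using S unfolding directed_def by blast
  have z0I: "z0 \<in> I" using Sp z0 by blast
  have "lo z = lo z0" if "z \<in> S" for z
  proof -
    have "z \<in> I" "Lf z = Lf z0" using Sp that z0 by auto
    then show ?thesis using lo_via_L z0I by metis
  qed
  then have "lo ` S = {lo z0}" using z0 by blast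
  moreover have "is_sup X le {lo z0} (lo z0)" using sup_single IX_E[OF z0I] by blast
  ultimately have "lo s = lo z0" using se(1) sup_unique by metis
  then show "Lf s = p" using Lf_eq[of s] Lf_eq[of z0] Sp z0 by auto
  fix q T t assume H2: "directed I IX_le T \<and> T \<subseteq> {z\<in>I. Lf z = q} \<and> is_sup I IX_le T t \<and> Rf ` T = Rf ` S"
  have T: "directed I IX_le T" and t: "is_sup I IX_le T t" using H2 by auto
  have TI: "T \<subseteq> I" using H2 by blast
  have SI: "S \<subseteq> I" using Sp by blast
  have "hi ` T = lo ` (Rf ` T)" using hi_via_R TI by force
  also have "\<dots> = lo ` (Rf ` S)" using H2 by simp
  also have "\<dots> = hi ` S" using hi_via_R SI by force
  finally have "hi ` T = hi ` S" .
  then have "is_inf X le (hi ` S) (hi t)" using sup_ends[OF T t] by simp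
  then have "hi t = hi s" using se(2) inf_unique by blast
  then show "Rf t = Rf s" using Rf_eq by simp
qed

lemma cond_iii_b:
  "\<forall>q S s. directed I IX_le S \<and> S \<subseteq> {z\<in>I. Rf z = q} \<and> is_sup I IX_le S s \<longrightarrow>
        Rf s = q \<and>
        (\<forall>p T t. directed I IX_le T \<and> T \<subseteq> {z\<in>I. Rf z = p} \<and> is_sup I IX_le T t \<and>
                 Lf ` T = Lf ` S \<longrightarrow> Lf t = Lf s)"
proof (intro allI impI conjI)
  fix q S s assume H: "directed I IX_le S \<and> S \<subseteq> {z\<in>I. Rf z = q} \<and> is_sup I IX_le S s"
  have S: "directed I IX_le S" and Sp: "S \<subseteq> {z\<in>I. Rf z = q}" and s: "is_sup I IX_le S s" using H by auto
  have se: "is_sup X le (lo ` S) (lo s)" "is_inf X le (hi ` S) (hi s)" using sup_ends[OF S s] by auto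
  obtain z0 where z0: "z0 \<in> S" using S unfolding directed_def by blast
  have z0I: "z0 \<in> I" using Sp z0 by blast
  have "hi z = hi z0" if "z \<in> S" for z
  proof -
    have "z \<in> I" "Rf z = Rf z0" using Sp that z0 by auto
    then show ?thesis using hi_via_R z0I by metis
  qed
  then have "hi ` S = {hi z0}" using z0 by blast
  moreover have "is_inf X le {hi z0} (hi z0)"
    unfolding is_inf_def using refl IX_E[OF z0I] by auto
  ultimately have "hi s = hi z0" using se(2) inf_unique by metis
  then show "Rf s = q" using Rf_eq[of s] Rf_eq[of z0] Sp z0 by auto
  fix p T t assume H2: "directed I IX_le T \<and> T \<subseteq> {z\<in>I. Rf z = p} \<and> is_sup I IX_le T t \<and> Lf ` T = Lf ` S"
  have T: "directed I IX_le T" and t: "is_sup I IX_le T t" using H2 by auto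
  have TI: "T \<subseteq> I" using H2 by blast
  have SI: "S \<subseteq> I" using Sp by blast
  have "lo ` T = hi ` (Lf ` T)" using lo_via_L TI by force
  also have "\<dots> = hi ` (Lf ` S)" using H2 by simp
  also have "\<dots> = lo ` S" using lo_via_L SI by force
  finally have "lo ` T = lo ` S" .
  then have "is_sup X le (lo ` S) (lo t)" using sup_ends[OF T t] by simp
  then have "lo t = lo s" using se(1) sup_unique by blast
  then show "Lf t = Lf s" using Lf_eq by simp
qed

lemma interval_domain_I: "interval_domain I IX_le Lf Rf"
  unfolding interval_domain_def
proof (intro conjI)
  show "interval_poset I IX_le Lf Rf" by (rule interval_poset_I)
  show "continuous_dcpo I IX_le" by (rule cdcpo_I)
  show "\<forall>x\<in>I. \<forall>p\<in>wb_up I IX_le x \<inter> maxs I IX_le.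
        (\<forall>m. is_inf I IX_le {Lf x, p} m \<longrightarrow> wb_up I IX_le m \<noteq> {}) \<and>
        (\<forall>m. is_inf I IX_le {p, Rf x} m \<longrightarrow> wb_up I IX_le m \<noteq> {})"
    using cond_i by blast
  show "\<forall>x\<in>I.
        (wb_up I IX_le x \<noteq> {} \<longleftrightarrow>
          (\<forall>y\<in>I. Lf y = Lf x \<and> IX_le y x \<longrightarrow>
             way_below {z\<in>I. Rf z = Rf y} IX_le y (Rf y))) \<and>
        (wb_up I IX_le x \<noteq> {} \<longleftrightarrow>
          (\<forall>y\<in>I. Rf y = Rf x \<and> IX_le y x \<longrightarrow>
             way_below {z\<in>I. Lf z = Lf y} IX_le y (Lf y)))"
    using cond_ii by blast
  show "\<forall>p S s. directed I IX_le S \<and> S \<subseteq> {z\<in>I. Lf z = p} \<and> is_sup I IX_le S s \<longrightarrow>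
        Lf s = p \<and>
        (\<forall>q T t. directed I IX_le T \<and> T \<subseteq> {z\<in>I. Lf z = q} \<and> is_sup I IX_le T t \<and>
                 Rf ` T = Rf ` S \<longrightarrow> Rf t = Rf s)" by (rule cond_iii_a)
  show "\<forall>q S s. directed I IX_le S \<and> S \<subseteq> {z\<in>I. Rf z = q} \<and> is_sup I IX_le S s \<longrightarrow>
        Rf s = q \<and>
        (\<forall>p T t. directed I IX_le T \<and> T \<subseteq> {z\<in>I. Rf z = p} \<and> is_sup I IX_le T t \<and>
                 Lf ` T = Lf ` S \<longrightarrow> Lf t = Lf s)" by (rule cond_iii_b)
  show "\<forall>x\<in>I. compact_wrt (scott_open I IX_le) {y\<in>maxs I IX_le. IX_le x y}"
    using cond_iv by blast
qed

end

locale gh2 = X: gh X leX + Y: gh Y leY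
  for X :: "'a set" and leX and Y :: "'b set" and leY +
  fixes f :: "'a \<Rightarrow> 'b"
  assumes arr: "G_arrow X leX Y leY f"
begin

lemma fX: "x \<in> X \<Longrightarrow> f x \<in> Y" using arr unfolding G_arrow_def by blast
lemma fmono: "x \<in> X \<Longrightarrow> y \<in> X \<Longrightarrow> leX x y \<Longrightarrow> leY (f x) (f y)"
  using arr unfolding G_arrow_def by blast
lemma fopen: "interval_open Y leY U \<Longrightarrow> interval_open X leX {x\<in>X. f x \<in> U}"
  using arr unfolding G_arrow_def by blast

lemma pres_sup:
  assumes S: "directed X leX S" and s: "is_sup X leX S s"
  shows "is_sup Y leY (f ` S) (f s)"
proof -
  have SX: "S \<subseteq> X" using S unfolding directed_def by blast
  have sX: "s \<in> X" using s unfolding is_sup_def by blast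
  have dS: "directed Y leY (f ` S)"
    unfolding directed_def
  proof (intro conjI ballI)
    show "f ` S \<subseteq> Y" using SX fX by blast
    show "f ` S \<noteq> {}" using S unfolding directed_def by blast
    fix x y assume "x \<in> f ` S" "y \<in> f ` S"
    then obtain u v where uv: "u \<in> S" "v \<in> S" "x = f u" "y = f v" by blast
    then obtain w where w: "w \<in> S" "leX u w" "leX v w" using S unfolding directed_def by blast
    then show "\<exists>z\<in>f ` S. leY x z \<and> leY y z" using uv fmono SX by blast
  qed
  have ub: "\<forall>y\<in>f ` S. leY y (f s)" using s fmono SX sX unfolding is_sup_def by blast
  obtain t where t: "is_sup Y leY (f ` S) t" using Y.sup_exists[OF dS fX[OF sX] ub] by blast
  have tY: "t \<in> Y" using t unfolding is_sup_def by blast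
  have ts: "leY t (f s)" using t ub fX[OF sX] unfolding is_sup_def by blast
  have st: "leY (f s) t"
  proof (rule ccontr)
    assume nst: "\<not> leY (f s) t"
    define V where "V = {x\<in>X. f x \<in> {y\<in>Y. \<not> leY y t}}"
    have Vo: "interval_open X leX V" unfolding V_def using fopen Y.open_ndown[OF tY] by blast
    have "s \<in> V" unfolding V_def using sX fX nst by blast
    then obtain a b where ab: "a \<in> X" "b \<in> X" "X.wb a s" "X.wb s b"
      "{z\<in>X. X.wb a z \<and> X.wb z b} \<subseteq> V" using Vo unfolding interval_open_def by blast
    obtain a' where a': "a' \<in> X" "X.wb a a'" "X.wb a' s" using X.interp[OF ab(1) sX ab(3)] by blast
    obtain z where z: "z \<in> S" "leX a' z" using X.wb_sup[OF a'(3) S s X.refl[OF sX]] by blast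
    have zX: "z \<in> X" using z SX by blast
    have "X.wb a z" using X.wb_trans_right[of a' z a] a' zX z by blast
    moreover have "leX z s" using s z unfolding is_sup_def by blast
    then have "X.wb z b" using X.wb_trans_left[of z s b] zX sX ab by blast
    ultimately have "z \<in> V" using ab zX by blast
    then have "\<not> leY (f z) t" unfolding V_def by blast
    moreover have "leY (f z) t" using t z unfolding is_sup_def by blast
    ultimately show False by blast
  qed
  have "t = f s" using Y.antisym tY fX[OF sX] ts st by blast
  then show ?thesis using t by simp
qed

lemma pres_inf:
  assumes S: "filtered X leX S" and s: "is_inf X leX S s"
  shows "is_inf Y leY (f ` S) (f s)"
proof -
  have SX: "S \<subseteq> X" using S unfolding filtered_def by blast
  have sX: "s \<in> X" using s unfolding is_inf_def by blast
  have fS: "filtered Y leY (f ` S)"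
    unfolding filtered_def
  proof (intro conjI ballI)
    show "f ` S \<subseteq> Y" using SX fX by blast
    show "f ` S \<noteq> {}" using S unfolding filtered_def by blast
    fix x y assume "x \<in> f ` S" "y \<in> f ` S"
    then obtain u v where uv: "u \<in> S" "v \<in> S" "x = f u" "y = f v" by blast
    then obtain w where w: "w \<in> S" "leX w u" "leX w v" using S unfolding filtered_def by blast
    then show "\<exists>z\<in>f ` S. leY z x \<and> leY z y" using uv fmono SX by blast
  qed
  have lb: "\<forall>y\<in>f ` S. leY (f s) y" using s fmono SX sX unfolding is_inf_def by blast
  obtain t where t: "is_inf Y leY (f ` S) t" using Y.inf_exists[OF fS fX[OF sX] lb] by blast
  have tY: "t \<in> Y" using t unfolding is_inf_def by blast
  have st: "leY (f s) t" using t lb fX[OF sX] unfolding is_inf_def by blast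
  have ts: "leY t (f s)"
  proof (rule ccontr)
    assume nts: "\<not> leY t (f s)"
    define V where "V = {x\<in>X. f x \<in> {y\<in>Y. \<not> leY t y}}"
    have Vo: "interval_open X leX V" unfolding V_def using fopen Y.open_nup[OF tY] by blast
    have "s \<in> V" unfolding V_def using sX fX nts by blast
    then obtain a b where ab: "a \<in> X" "b \<in> X" "X.wb a s" "X.wb s b"
      "{z\<in>X. X.wb a z \<and> X.wb z b} \<subseteq> V" using Vo unfolding interval_open_def by blast
    obtain b' where b': "b' \<in> X" "X.wb s b'" "X.wb b' b" using X.interp[OF sX ab(2) ab(4)] by blast
    have "\<exists>z\<in>S. leX z b'" using X.bic1[OF sX b'(1)] b'(2) S s X.refl[OF sX] by blast
    then obtain z where z: "z \<in> S" "leX z b'" by blast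
    have zX: "z \<in> X" using z SX by blast
    have "X.wb z b" using X.wb_trans_left[of z b' b] zX b' z by blast
    moreover have "leX s z" using s z unfolding is_inf_def by blast
    then have "X.wb a z" using X.wb_trans_right[of s z a] zX sX ab by blast
    ultimately have "z \<in> V" using ab zX by blast
    then have "\<not> leY t (f z)" unfolding V_def by blast
    moreover have "leY t (f z)" using t z unfolding is_inf_def by blast
    ultimately show False by blast
  qed
  have "t = f s" using Y.antisym tY fX[OF sX] ts st by blast
  then show ?thesis using t by simp
qed

abbreviation Im where "Im \<equiv> Imap X leX Y leY f"

lemma Im_eq: "Im S = Y.ci (f (X.lo S)) (f (X.hi S))" unfolding Imap_def by simp

lemma Im_E: assumes S: "S \<in> X.I"
  shows "Im S \<in> Y.I \<and> Y.lo (Im S) = f (X.lo S) \<and> Y.hi (Im S) = f (X.hi S)"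
proof -
  have E: "X.lo S \<in> X" "X.hi S \<in> X" "leX (X.lo S) (X.hi S)" using X.IX_E[OF S] by auto
  have E2: "f (X.lo S) \<in> Y" "f (X.hi S) \<in> Y" "leY (f (X.lo S)) (f (X.hi S))" using E fX fmono by auto
  show ?thesis using Im_eq Y.IX_I[OF E2] Y.ilo_cint[OF E2] Y.ihi_cint[OF E2] by simp
qed

lemma Im_mono: assumes S: "S \<in> X.I" and T: "T \<in> X.I" and ST: "IX_le S T"
  shows "IX_le (Im S) (Im T)"
proof -
  have "leX (X.lo S) (X.lo T) \<and> leX (X.hi T) (X.hi S)" using X.IX_le_iff[OF S T] ST by blast
  then have "leY (f (X.lo S)) (f (X.lo T)) \<and> leY (f (X.hi T)) (f (X.hi S))"
    using fmono X.IX_E[OF S] X.IX_E[OF T] by blast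
  then show ?thesis using Y.IX_le_iff Im_E[OF S] Im_E[OF T] by simp
qed

lemma Im_scott: "scott_continuous X.I IX_le Y.I IX_le Im"
  unfolding scott_continuous_def
proof (intro conjI allI impI)
  show "Im ` X.I \<subseteq> Y.I" using Im_E by blast
  fix U assume U: "scott_open Y.I IX_le U"
  show "scott_open X.I IX_le {x\<in>X.I. Im x \<in> U}"
    unfolding scott_open_def
  proof (intro conjI ballI allI impI)
    show "{x\<in>X.I. Im x \<in> U} \<subseteq> X.I" by blast
  next
    fix x y assume x: "x \<in> {x\<in>X.I. Im x \<in> U}" and y: "y \<in> X.I" and xy: "IX_le x y"
    have "IX_le (Im x) (Im y)" using Im_mono x y xy by blast
    then have "Im y \<in> U" using U x Im_E[OF y] unfolding scott_open_def by blast
    then show "y \<in> {x\<in>X.I. Im x \<in> U}" using y by blast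
  next
    fix F s assume H: "directed X.I IX_le F \<and> is_sup X.I IX_le F s \<and> s \<in> {x\<in>X.I. Im x \<in> U}"
    have F: "directed X.I IX_le F" and s: "is_sup X.I IX_le F s" and sU: "Im s \<in> U" using H by auto
    have FI: "F \<subseteq> X.I" using F unfolding directed_def by blast
    have se: "is_sup X leX (X.lo ` F) (X.lo s)" "is_inf X leX (X.hi ` F) (X.hi s)" using X.sup_ends[OF F s] by auto
    have dd: "directed X leX (X.lo ` F)" "filtered X leX (X.hi ` F)" using X.IX_dir[OF F] by auto
    have G: "directed Y.I IX_le (Im ` F)"
      unfolding directed_def
    proof (intro conjI ballI)
      show "Im ` F \<subseteq> Y.I" using Im_E FI by blast
      show "Im ` F \<noteq> {}" using F unfolding directed_def by blast
      fix x y assume "x \<in> Im ` F" "y \<in> Im ` F"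
      then obtain u v where uv: "u \<in> F" "v \<in> F" "x = Im u" "y = Im v" by blast
      then obtain w where w: "w \<in> F" "IX_le u w" "IX_le v w" using F unfolding directed_def by blast
      then show "\<exists>z\<in>Im ` F. IX_le x z \<and> IX_le y z" using uv Im_mono FI by blast
    qed
    obtain l r where lr: "is_sup Y leY (Y.lo ` Im ` F) l" "is_inf Y leY (Y.hi ` Im ` F) r"
      "is_sup Y.I IX_le (Im ` F) (Y.ci l r)" using Y.IX_sup[OF G] by blast
    have "Y.lo ` Im ` F = f ` X.lo ` F" using Im_E FI by (force simp: image_image)
    then have "l = f (X.lo s)" using lr(1) pres_sup[OF dd(1) se(1)] Y.sup_unique by simp
    have "Y.hi ` Im ` F = f ` X.hi ` F" using Im_E FI by (force simp: image_image)
    then have "r = f (X.hi s)" using lr(2) pres_inf[OF dd(2) se(2)] Y.inf_unique by simp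
    have "is_sup Y.I IX_le (Im ` F) (Im s)" using lr(3) \<open>l = _\<close> \<open>r = _\<close> Im_eq by simp
    then have "Im ` F \<inter> U \<noteq> {}" using U G sU unfolding scott_open_def by blast
    then show "F \<inter> {x\<in>X.I. Im x \<in> U} \<noteq> {}" using FI by blast
  qed
qed

lemma Im_IN: "IN_arrow X.I IX_le X.Lf X.Rf Y.I IX_le Y.Lf Y.Rf Im"
  unfolding IN_arrow_def
proof (intro conjI ballI)
  show "scott_continuous X.I IX_le Y.I IX_le Im" by (rule Im_scott)
next
  fix x assume x: "x \<in> X.I"
  have E: "X.lo x \<in> X" "X.hi x \<in> X" using X.IX_E[OF x] by auto
  show "Im (X.Lf x) = Y.Lf (Im x)"
    using X.Lf_eq Y.Lf_eq Im_eq X.lo_single X.hi_single E Im_E[OF x] by simp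
  show "Im (X.Rf x) = Y.Rf (Im x)"
    using X.Rf_eq Y.Rf_eq Im_eq X.lo_single X.hi_single E Im_E[OF x] by simp
qed

end

theorem mainTheorem14:
  shows "(\<forall>(X::'a set) le. globally_hyperbolic X le \<longrightarrow>
            interval_domain (IX X le) IX_le (ileft X le) (iright X le))
       \<and> (\<forall>(X::'a set) leX (Y::'b set) leY f.
            globally_hyperbolic X leX \<and> globally_hyperbolic Y leY \<and> G_arrow X leX Y leY f \<longrightarrow>
            (\<forall>S\<in>IX X leX. Imap X leX Y leY f S \<in> IX Y leY) \<and>
            IN_arrow (IX X leX) IX_le (ileft X leX) (iright X leX)
                     (IX Y leY) IX_le (ileft Y leY) (iright Y leY) (Imap X leX Y leY f))
       \<and> (\<forall>(X::'a set) le. globally_hyperbolic X le \<longrightarrow>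
            (\<forall>S\<in>IX X le. Imap X le X le id S = S))
       \<and> (\<forall>(X::'a set) leX (Y::'b set) leY (Z::'c set) leZ f g.
            globally_hyperbolic X leX \<and> globally_hyperbolic Y leY \<and> globally_hyperbolic Z leZ \<and>
            G_arrow X leX Y leY f \<and> G_arrow Y leY Z leZ g \<longrightarrow>
            (\<forall>S\<in>IX X leX. Imap X leX Z leZ (g \<circ> f) S = Imap Y leY Z leZ g (Imap X leX Y leY f S)))"
proof -
  have P1: "\<forall>(X::'a set) le. globally_hyperbolic X le \<longrightarrow>
            interval_domain (IX X le) IX_le (ileft X le) (iright X le)"
  proof (intro allI impI)
    fix X :: "'a set" and le assume H: "globally_hyperbolic X le"
    interpret gh X le by (rule gh.intro) (rule H)
    show "interval_domain (IX X le) IX_le (ileft X le) (iright X le)" by (rule interval_domain_I)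
  qed
  have P2: "\<forall>(X::'a set) leX (Y::'b set) leY f.
            globally_hyperbolic X leX \<and> globally_hyperbolic Y leY \<and> G_arrow X leX Y leY f \<longrightarrow>
            (\<forall>S\<in>IX X leX. Imap X leX Y leY f S \<in> IX Y leY) \<and>
            IN_arrow (IX X leX) IX_le (ileft X leX) (iright X leX)
                     (IX Y leY) IX_le (ileft Y leY) (iright Y leY) (Imap X leX Y leY f)"
  proof (intro allI impI)
    fix X :: "'a set" and leX and Y :: "'b set" and leY f
    assume H: "globally_hyperbolic X leX \<and> globally_hyperbolic Y leY \<and> G_arrow X leX Y leY f"
    interpret gh2 X leX Y leY f
      using H by (intro gh2.intro gh.intro gh2_axioms.intro) auto
    show "(\<forall>S\<in>IX X leX. Imap X leX Y leY f S \<in> IX Y leY) \<and>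
            IN_arrow (IX X leX) IX_le (ileft X leX) (iright X leX)
                     (IX Y leY) IX_le (ileft Y leY) (iright Y leY) (Imap X leX Y leY f)"
      using Im_E Im_IN by blast
  qed
  have P3: "\<forall>(X::'a set) le. globally_hyperbolic X le \<longrightarrow>
            (\<forall>S\<in>IX X le. Imap X le X le id S = S)"
  proof (intro allI impI ballI)
    fix X :: "'a set" and le S assume H: "globally_hyperbolic X le" and S: "S \<in> IX X le"
    interpret gh X le by (rule gh.intro) (rule H)
    show "Imap X le X le id S = S" unfolding Imap_def using IX_eq[OF S] by simp
  qed
  have P4: "\<forall>(X::'a set) leX (Y::'b set) leY (Z::'c set) leZ f g.
            globally_hyperbolic X leX \<and> globally_hyperbolic Y leY \<and> globally_hyperbolic Z leZ \<and>
            G_arrow X leX Y leY f \<and> G_arrow Y leY Z leZ g \<longrightarrow>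
            (\<forall>S\<in>IX X leX. Imap X leX Z leZ (g \<circ> f) S = Imap Y leY Z leZ g (Imap X leX Y leY f S))"
  proof (intro allI impI ballI)
    fix X :: "'a set" and leX and Y :: "'b set" and leY and Z :: "'c set" and leZ f g S
    assume H: "globally_hyperbolic X leX \<and> globally_hyperbolic Y leY \<and> globally_hyperbolic Z leZ \<and>
            G_arrow X leX Y leY f \<and> G_arrow Y leY Z leZ g"
      and S: "S \<in> IX X leX"
    interpret gh2 X leX Y leY f
      using H by (intro gh2.intro gh.intro gh2_axioms.intro) auto
    have "Y.lo (Im S) = f (X.lo S)" "Y.hi (Im S) = f (X.hi S)" using Im_E[OF S] by auto
    then show "Imap X leX Z leZ (g \<circ> f) S = Imap Y leY Z leZ g (Imap X leX Y leY f S)"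
      unfolding Imap_def[of Y leY Z leZ g] by (simp add: Imap_def)
  qed
  show ?thesis using P1 P2 P3 P4 by blast
qed


end
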